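(* Fix an integer $r\ge2$ and $\theta=(\mu,\sigma,\xi)$ with $\sigma>0$, $\xi\in\mathbb{R}$. Let $(Y_1,\ldots,Y_r)$ follow the GEV$_r(\mu,\sigma,\xi)$ distribution and set $Z_j=(Y_j-\mu)/\sigma$. Define $$D_r = -\log\sigma - (1+\xi Z_r)^{-1/\xi} + (1+\xi Z_{r-1})^{-1/\xi} - \Big(\frac1\xi+1\Big)\log(1+\xi Z_r)$$ (for $\xi=0$ as the limit $\xi\to0$). Then $E[D_r] = -\log\sigma - 1 + (1+\xi)\psi(r)$, where $\psi$ is the digamma function, and $E[D_r^2]<\infty$.
   Context: The GEV$_r(\mu,\sigma,\xi)$ distribution is the distribution on $\{y_1>y_2>\cdots>y_r\}$ with density $$f_r(y_1,\ldots,y_r\mid\mu,\sigma,\xi) = \sigma^{-r}\exp\Big\{-(1+\xi z_r)^{-1/\xi} - \Big(\frac1\xi+1\Big)\sum_{j=1}^r \log(1+\xi z_j)\Big\},$$ where $z_j=(y_j-\mu)/\sigma$, supported where $1+\xi z_j>0$ for all $j$; for $\xi=0$ the density is the limit as $\xi\to0$. *)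

theory Defs
  imports "HOL-Analysis.Analysis"
begin

definition gev_z :: "real \<Rightarrow> real \<Rightarrow> real \<Rightarrow> real" where
  "gev_z mu \<sigma> y = (y - mu) / \<sigma>"

definition gev_t :: "real \<Rightarrow> real \<Rightarrow> real" where
  "gev_t xi z = (if xi = 0 then exp (- z) else (1 + xi * z) powr (- 1 / xi))"

definition gev_h :: "real \<Rightarrow> real \<Rightarrow> real" where
  "gev_h xi z = (if xi = 0 then z else (1 / xi + 1) * ln (1 + xi * z))"

definition gev_supp :: "real \<Rightarrow> real \<Rightarrow> bool" where
  "gev_supp xi z \<longleftrightarrow> 1 + xi * z > 0"

definition gev_r_density :: "nat \<Rightarrow> real \<Rightarrow> real \<Rightarrow> real \<Rightarrow> (nat \<Rightarrow> real) \<Rightarrow> real" where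
  "gev_r_density r mu \<sigma> xi y =
     (if (\<forall>j\<in>{1..<r}. y j > y (Suc j)) \<and> (\<forall>j\<in>{1..r}. gev_supp xi (gev_z mu \<sigma> (y j)))
      then \<sigma> powi (- int r) *
           exp (- gev_t xi (gev_z mu \<sigma> (y r))
                - (\<Sum>j=1..r. gev_h xi (gev_z mu \<sigma> (y j))))
      else 0)"

definition gev_r_measure :: "nat \<Rightarrow> real \<Rightarrow> real \<Rightarrow> real \<Rightarrow> (nat \<Rightarrow> real) measure" where
  "gev_r_measure r mu \<sigma> xi =
     density (PiM {1..r} (\<lambda>_. lborel)) (\<lambda>y. ennreal (gev_r_density r mu \<sigma> xi y))"

definition gev_D :: "nat \<Rightarrow> real \<Rightarrow> real \<Rightarrow> real \<Rightarrow> (nat \<Rightarrow> real) \<Rightarrow> real" where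
  "gev_D r mu \<sigma> xi y =
     - ln \<sigma> - gev_t xi (gev_z mu \<sigma> (y r)) + gev_t xi (gev_z mu \<sigma> (y (r - 1)))
     - gev_h xi (gev_z mu \<sigma> (y r))"

end

theory Submission
  imports Defs "HOL-Probability.Distributions"
begin


lemma nn_subst:
  fixes f g g' :: "real \<Rightarrow> real"
  assumes S: "S \<in> sets borel"
    and der: "\<And>x. x \<in> S \<Longrightarrow> (g has_field_derivative g' x) (at x)"
    and inj: "inj_on g S"
    and nonneg: "\<And>x. x \<in> S \<Longrightarrow> 0 \<le> f (g x)"
    and m1: "(\<lambda>x. indicator (g ` S) x * f x) \<in> borel_measurable borel"
    and m2: "(\<lambda>x. indicator S x * (\<bar>g' x\<bar> * f (g x))) \<in> borel_measurable borel"
  shows "(\<integral>\<^sup>+x. ennreal (indicator (g ` S) x * f x) \<partial>lborel)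
       = (\<integral>\<^sup>+x. ennreal (indicator S x * (\<bar>g' x\<bar> * f (g x))) \<partial>lborel)"
proof -
  let ?F1 = "\<lambda>x. indicator (g ` S) x * f x"
  let ?F2 = "\<lambda>x. indicator S x * (\<bar>g' x\<bar> * f (g x))"
  have nn1: "\<And>x. 0 \<le> ?F1 x" using nonneg by (auto simp: indicator_def)
  have nn2: "\<And>x. 0 \<le> ?F2 x" using nonneg by (auto simp: indicator_def)
  have S': "S \<in> sets lebesgue" using S by simp
  have der': "\<And>x. x \<in> S \<Longrightarrow> (g has_field_derivative g' x) (at x within S)"
    using der by (rule has_field_derivative_at_within)
  note cov = has_absolute_integral_change_of_variables_1'[OF S' der' inj]
  have i1: "integrable lebesgue ?F1 \<longleftrightarrow> integrable lborel ?F1"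
    using m1 by (intro integrable_completion) (simp add: measurable_lborel1)
  have i2: "integrable lebesgue ?F2 \<longleftrightarrow> integrable lborel ?F2"
    using m2 by (intro integrable_completion) (simp add: measurable_lborel1)
  have a1: "f absolutely_integrable_on (g ` S) \<longleftrightarrow> integrable lborel ?F1"
    unfolding set_integrable_def using i1 by (simp add: mult.commute)
  have a2: "(\<lambda>x. \<bar>g' x\<bar> * f (g x)) absolutely_integrable_on S \<longleftrightarrow> integrable lborel ?F2"
    unfolding set_integrable_def using i2 by (simp add: mult.commute)
  show ?thesis
  proof (cases "integrable lborel ?F2")
    case True
    then have A: "(\<lambda>x. \<bar>g' x\<bar> * f (g x)) absolutely_integrable_on S" using a2 by simp
    then have B: "f absolutely_integrable_on (g ` S) \<and> integral (g ` S) f = integral S (\<lambda>x. \<bar>g' x\<bar> * f (g x))"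
      using cov by blast
    have "(\<integral>\<^sup>+x. ennreal (?F2 x) \<partial>lborel) = ennreal (integral\<^sup>L lborel ?F2)"
      using True nn2 by (intro nn_integral_eq_integral) auto
    also have "integral\<^sup>L lborel ?F2 = integral\<^sup>L lebesgue ?F2"
      using m2 by (simp add: integral_completion measurable_lborel1)
    also have "\<dots> = integral S (\<lambda>x. \<bar>g' x\<bar> * f (g x))"
      using set_lebesgue_integral_eq_integral(2)[OF A]
      by (simp add: set_lebesgue_integral_def mult.commute)
    also have "\<dots> = integral (g ` S) f" using B by simp
    also have "\<dots> = integral\<^sup>L lebesgue ?F1"
      using set_lebesgue_integral_eq_integral(2)[OF conjunct1[OF B]]
      by (simp add: set_lebesgue_integral_def mult.commute)
    also have "\<dots> = integral\<^sup>L lborel ?F1"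
      using m1 by (simp add: integral_completion measurable_lborel1)
    also have "ennreal \<dots> = (\<integral>\<^sup>+x. ennreal (?F1 x) \<partial>lborel)"
      using B a1 nn1 by (intro nn_integral_eq_integral[symmetric]) auto
    finally show ?thesis by simp
  next
    case False
    then have "\<not> integrable lborel ?F1" using a1 a2 cov by blast
    then have "(\<integral>\<^sup>+x. ennreal (?F1 x) \<partial>lborel) = \<infinity>"
      using m1 nn1 by (auto simp: integrable_iff_bounded measurable_lborel1 less_top[symmetric])
    moreover have "(\<integral>\<^sup>+x. ennreal (?F2 x) \<partial>lborel) = \<infinity>"
      using m2 nn2 False by (auto simp: integrable_iff_bounded measurable_lborel1 less_top[symmetric])
    ultimately show ?thesis by simp
  qed
qed


definition Tf :: "real \<Rightarrow> real \<Rightarrow> real \<Rightarrow> real \<Rightarrow> real" where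
  "Tf mu \<sigma> xi y = gev_t xi (gev_z mu \<sigma> y)"
definition Sp :: "real \<Rightarrow> real \<Rightarrow> real \<Rightarrow> real \<Rightarrow> bool" where
  "Sp mu \<sigma> xi y = gev_supp xi (gev_z mu \<sigma> y)"
definition wgt :: "real \<Rightarrow> real \<Rightarrow> real \<Rightarrow> real \<Rightarrow> real" where
  "wgt mu \<sigma> xi y = (if Sp mu \<sigma> xi y then exp (- gev_h xi (gev_z mu \<sigma> y)) / \<sigma> else 0)"
definition Yi :: "real \<Rightarrow> real \<Rightarrow> real \<Rightarrow> real \<Rightarrow> real" where
  "Yi mu \<sigma> xi t = (if xi = 0 then mu - \<sigma> * ln t else mu + \<sigma> * (t powr (- xi) - 1) / xi)"

context
  fixes mu \<sigma> xi :: real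
  assumes sig: "\<sigma> > 0"
begin

lemma Tf_pos: "Sp mu \<sigma> xi y \<Longrightarrow> Tf mu \<sigma> xi y > 0"
  by (auto simp: Tf_def Sp_def gev_t_def gev_supp_def)

lemma Yi_inv: "t > 0 \<Longrightarrow> Sp mu \<sigma> xi (Yi mu \<sigma> xi t) \<and> Tf mu \<sigma> xi (Yi mu \<sigma> xi t) = t"
proof (cases "xi = 0")
  case True
  assume t: "t > 0"
  show ?thesis unfolding Sp_def Tf_def Yi_def gev_t_def gev_supp_def gev_z_def using True t sig by simp
next
  case False
  assume t: "t > 0"
  have z: "gev_z mu \<sigma> (Yi mu \<sigma> xi t) = (t powr (- xi) - 1) / xi"
    using False sig by (simp add: Yi_def gev_z_def)
  have b: "1 + xi * gev_z mu \<sigma> (Yi mu \<sigma> xi t) = t powr (- xi)" using False by (simp add: z)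
  have "(t powr (- xi)) powr (- 1 / xi) = t" using False t by (simp add: powr_powr)
  then show ?thesis using b t False by (simp add: Sp_def Tf_def gev_t_def gev_supp_def)
qed

lemma Tf_inv: "Sp mu \<sigma> xi y \<Longrightarrow> Yi mu \<sigma> xi (Tf mu \<sigma> xi y) = y"
proof (cases "xi = 0")
  case True
  assume "Sp mu \<sigma> xi y"
  then show ?thesis unfolding Sp_def Tf_def Yi_def gev_t_def gev_z_def using True sig by simp
next
  case False
  assume s: "Sp mu \<sigma> xi y"
  let ?b = "1 + xi * gev_z mu \<sigma> y"
  have bp: "?b > 0" using s by (simp add: Sp_def gev_supp_def)
  have "(?b powr (- 1 / xi)) powr (- xi) = ?b" using False bp by (simp add: powr_powr)
  then have "Tf mu \<sigma> xi y powr (- xi) = ?b" using False by (simp add: Tf_def gev_t_def)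
  then show ?thesis using False sig by (simp add: Yi_def gev_z_def field_simps)
qed

lemma h_eq: "Sp mu \<sigma> xi y \<Longrightarrow> gev_h xi (gev_z mu \<sigma> y) = - (1 + xi) * ln (Tf mu \<sigma> xi y)"
proof (cases "xi = 0")
  case True
  assume "Sp mu \<sigma> xi y"
  then show ?thesis unfolding Tf_def gev_t_def gev_h_def using True by simp
next
  case False
  assume s: "Sp mu \<sigma> xi y"
  let ?b = "1 + xi * gev_z mu \<sigma> y"
  have bp: "?b > 0" using s by (simp add: Sp_def gev_supp_def)
  have "ln (Tf mu \<sigma> xi y) = (- 1 / xi) * ln ?b" using False bp by (simp add: Tf_def gev_t_def ln_powr)
  then show ?thesis using False by (simp add: gev_h_def field_simps)
qed

lemma Yi_deriv: "t > 0 \<Longrightarrow> (Yi mu \<sigma> xi has_field_derivative (- \<sigma> * t powr (- xi - 1))) (at t)"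
proof (cases "xi = 0")
  case True
  assume t: "t > 0"
  have "((\<lambda>t. mu - \<sigma> * ln t) has_field_derivative (- \<sigma> * t powr (- xi - 1))) (at t)"
    using t True by (auto intro!: derivative_eq_intros simp: powr_minus_divide)
  moreover have "Yi mu \<sigma> xi = (\<lambda>t. mu - \<sigma> * ln t)" unfolding Yi_def[abs_def] using True by simp
  ultimately show ?thesis by simp
next
  case False
  assume t: "t > 0"
  have "((\<lambda>t. mu + \<sigma> * (t powr (- xi) - 1) / xi) has_field_derivative (- \<sigma> * t powr (- xi - 1))) (at t)"
    using t False by (auto intro!: derivative_eq_intros simp: field_simps)
  moreover have "Yi mu \<sigma> xi = (\<lambda>t. mu + \<sigma> * (t powr (- xi) - 1) / xi)" unfolding Yi_def[abs_def] using False by simp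
  ultimately show ?thesis by simp
qed

lemma Yi_strict_dec: "0 < s \<Longrightarrow> s < t \<Longrightarrow> Yi mu \<sigma> xi t < Yi mu \<sigma> xi s"
proof -
  assume s: "0 < s" and st: "s < t"
  show ?thesis
  proof (cases "xi = 0")
    case True
    then show ?thesis unfolding Yi_def using s st sig by simp
  next
    case False
    show ?thesis
    proof (cases "xi > 0")
      case True
      have "t powr (- xi) < s powr (- xi)" using s st True by (simp add: powr_less_mono2_neg)
      then show ?thesis using True sig by (simp add: Yi_def divide_strict_right_mono)
    next
      case F2: False
      then have xn: "xi < 0" using False by simp
      have "s powr (- xi) < t powr (- xi)" using s st xn by (simp add: powr_less_mono2)
      then have "(t powr (- xi) - 1) / xi < (s powr (- xi) - 1) / xi"
        using xn by (simp add: divide_strict_right_mono_neg)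
      then have "\<sigma> * ((t powr (- xi) - 1) / xi) < \<sigma> * ((s powr (- xi) - 1) / xi)"
        using sig by (intro mult_strict_left_mono)
      then show ?thesis using False unfolding Yi_def by simp
    qed
  qed
qed

lemma Tf_strict_dec: "Sp mu \<sigma> xi a \<Longrightarrow> Sp mu \<sigma> xi b \<Longrightarrow> a < b \<Longrightarrow> Tf mu \<sigma> xi b < Tf mu \<sigma> xi a"
proof (rule ccontr)
  assume a: "Sp mu \<sigma> xi a" and b: "Sp mu \<sigma> xi b" and ab: "a < b" and n: "\<not> Tf mu \<sigma> xi b < Tf mu \<sigma> xi a"
  then have "Tf mu \<sigma> xi a \<le> Tf mu \<sigma> xi b" by simp
  then have "Yi mu \<sigma> xi (Tf mu \<sigma> xi b) \<le> Yi mu \<sigma> xi (Tf mu \<sigma> xi a)"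
    using Yi_strict_dec[of "Tf mu \<sigma> xi a" "Tf mu \<sigma> xi b"] Tf_pos[OF a] by (cases "Tf mu \<sigma> xi a = Tf mu \<sigma> xi b") auto
  then show False using Tf_inv a b ab by simp
qed

lemma Tf_less_iff: "Sp mu \<sigma> xi a \<Longrightarrow> Sp mu \<sigma> xi b \<Longrightarrow> Tf mu \<sigma> xi b < Tf mu \<sigma> xi a \<longleftrightarrow> a < b"
  using Tf_strict_dec by (metis linorder_neqE_linordered_idom order_less_asym)

lemma Yi_image: "A \<subseteq> {0<..} \<Longrightarrow> Yi mu \<sigma> xi ` A = {y. Sp mu \<sigma> xi y \<and> Tf mu \<sigma> xi y \<in> A}"
proof
  assume A: "A \<subseteq> {0<..}"
  show "Yi mu \<sigma> xi ` A \<subseteq> {y. Sp mu \<sigma> xi y \<and> Tf mu \<sigma> xi y \<in> A}" using A Yi_inv by auto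
  show "{y. Sp mu \<sigma> xi y \<and> Tf mu \<sigma> xi y \<in> A} \<subseteq> Yi mu \<sigma> xi ` A"
  proof
    fix y assume "y \<in> {y. Sp mu \<sigma> xi y \<and> Tf mu \<sigma> xi y \<in> A}"
    then show "y \<in> Yi mu \<sigma> xi ` A" using Tf_inv by (metis (mono_tags) image_eqI mem_Collect_eq)
  qed
qed

lemma Yi_inj: "inj_on (Yi mu \<sigma> xi) {0<..}"
  by (rule inj_onI) (metis Yi_inv greaterThan_iff)

lemma jac: "t > 0 \<Longrightarrow> \<bar>- \<sigma> * t powr (- xi - 1)\<bar> * wgt mu \<sigma> xi (Yi mu \<sigma> xi t) = 1"
proof -
  assume t: "t > 0"
  have s: "Sp mu \<sigma> xi (Yi mu \<sigma> xi t)" and tt: "Tf mu \<sigma> xi (Yi mu \<sigma> xi t) = t" using Yi_inv[OF t] by auto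
  have "wgt mu \<sigma> xi (Yi mu \<sigma> xi t) = exp ((1 + xi) * ln t) / \<sigma>" using s tt h_eq[OF s] by (simp add: wgt_def algebra_simps)
  also have "exp ((1 + xi) * ln t) = t powr (1 + xi)" using t by (simp add: powr_def)
  finally have "wgt mu \<sigma> xi (Yi mu \<sigma> xi t) = t powr (1 + xi) / \<sigma>" .
  then show ?thesis using sig t by (simp add: abs_mult powr_add[symmetric])
qed


lemma wgt_nonneg: "wgt mu \<sigma> xi y \<ge> 0" using sig by (simp add: wgt_def)

end

lemma meas_Tf[measurable]: "Tf mu \<sigma> xi \<in> borel_measurable borel"
  unfolding Tf_def[abs_def] gev_t_def gev_z_def by measurable

lemma meas_Sp[measurable]: "Measurable.pred borel (Sp mu \<sigma> xi)"
  unfolding Sp_def[abs_def] gev_supp_def gev_z_def by measurable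

lemma meas_wgt[measurable]: "wgt mu \<sigma> xi \<in> borel_measurable borel"
  unfolding wgt_def[abs_def] Sp_def gev_supp_def gev_h_def gev_z_def by measurable

context
  fixes mu \<sigma> xi :: real
  assumes sig: "\<sigma> > 0"
begin

lemma subst_T:
  assumes A: "A \<subseteq> {0<..}" "A \<in> sets borel"
    and G: "G \<in> borel_measurable borel" "\<And>t. t \<in> A \<Longrightarrow> G t \<ge> 0"
  shows "(\<integral>\<^sup>+y. ennreal (indicator {y. Sp mu \<sigma> xi y \<and> Tf mu \<sigma> xi y \<in> A} y * (wgt mu \<sigma> xi y * G (Tf mu \<sigma> xi y))) \<partial>lborel)
       = (\<integral>\<^sup>+t. ennreal (indicator A t * G t) \<partial>lborel)"
proof -
  have img: "Yi mu \<sigma> xi ` A = {y. Sp mu \<sigma> xi y \<and> Tf mu \<sigma> xi y \<in> A}" using Yi_image[OF sig] A by simp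
  have eq2: "indicator A t * (\<bar>- \<sigma> * t powr (- xi - 1)\<bar> * (wgt mu \<sigma> xi (Yi mu \<sigma> xi t) * G (Tf mu \<sigma> xi (Yi mu \<sigma> xi t)))) = indicator A t * G t" for t
  proof (cases "t \<in> A")
    case True
    then have t: "t > 0" using A by auto
    then show ?thesis using True jac[OF sig t] Yi_inv[OF sig t] by (simp add: mult.assoc[symmetric])
  qed simp
  have "(\<integral>\<^sup>+y. ennreal (indicator (Yi mu \<sigma> xi ` A) y * (wgt mu \<sigma> xi y * G (Tf mu \<sigma> xi y))) \<partial>lborel)
      = (\<integral>\<^sup>+t. ennreal (indicator A t * (\<bar>- \<sigma> * t powr (- xi - 1)\<bar> * (wgt mu \<sigma> xi (Yi mu \<sigma> xi t) * G (Tf mu \<sigma> xi (Yi mu \<sigma> xi t))))) \<partial>lborel)"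
  proof (rule nn_subst)
    show "A \<in> sets borel" using A by simp
    show "\<And>x. x \<in> A \<Longrightarrow> (Yi mu \<sigma> xi has_field_derivative - \<sigma> * x powr (- xi - 1)) (at x)"
      using A Yi_deriv[OF sig] by auto
    show "inj_on (Yi mu \<sigma> xi) A" using Yi_inj[OF sig] A inj_on_subset by blast
    show "\<And>x. x \<in> A \<Longrightarrow> 0 \<le> wgt mu \<sigma> xi (Yi mu \<sigma> xi x) * G (Tf mu \<sigma> xi (Yi mu \<sigma> xi x))"
      using A Yi_inv[OF sig] G wgt_nonneg[OF sig] by (auto intro!: mult_nonneg_nonneg)
    have "{y. Sp mu \<sigma> xi y \<and> Tf mu \<sigma> xi y \<in> A} \<in> sets borel" using A by measurable
    then show "(\<lambda>x. indicator (Yi mu \<sigma> xi ` A) x * (wgt mu \<sigma> xi x * G (Tf mu \<sigma> xi x))) \<in> borel_measurable borel"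
      unfolding img using G by measurable
    show "(\<lambda>x. indicator A x * (\<bar>- \<sigma> * x powr (- xi - 1)\<bar> * (wgt mu \<sigma> xi (Yi mu \<sigma> xi x) * G (Tf mu \<sigma> xi (Yi mu \<sigma> xi x))))) \<in> borel_measurable borel"
      unfolding eq2 using A G by measurable
  qed
  then show ?thesis unfolding img eq2 .
qed

end


definition chain :: "nat \<Rightarrow> real \<Rightarrow> (nat \<Rightarrow> real) \<Rightarrow> bool" where
  "chain n c y \<longleftrightarrow> (\<forall>j\<in>{1..<n}. y (Suc j) < y j) \<and> (0 < n \<longrightarrow> c < y n)"

lemma meas_chain[measurable]:
  "Measurable.pred (PiM {1..n} (\<lambda>_. lborel)) (chain n c)"
proof -
  have A: "Measurable.pred (PiM {1..n} (\<lambda>_. lborel)) (\<lambda>y::nat\<Rightarrow>real. \<forall>j\<in>{1..<n}. y (Suc j) < y j)"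
  proof (rule pred_intros_finite(3))
    fix j assume j: "j \<in> {1..<n}"
    then have "j \<in> {1..n}" "Suc j \<in> {1..n}" by auto
    then have a: "(\<lambda>y::nat\<Rightarrow>real. y j) \<in> borel_measurable (PiM {1..n} (\<lambda>_. lborel))"
      and b: "(\<lambda>y::nat\<Rightarrow>real. y (Suc j)) \<in> borel_measurable (PiM {1..n} (\<lambda>_. lborel))"
      using measurable_component_singleton[of j "{1..n}" "\<lambda>_. lborel"]
        measurable_component_singleton[of "Suc j" "{1..n}" "\<lambda>_. lborel"] by simp_all
    show "Measurable.pred (PiM {1..n} (\<lambda>_. lborel)) (\<lambda>y::nat\<Rightarrow>real. y (Suc j) < y j)"
      using borel_measurable_pred_less[OF b a] by simp
  qed simp
  have B: "Measurable.pred (PiM {1..n} (\<lambda>_. lborel)) (\<lambda>y::nat\<Rightarrow>real. 0 < n \<longrightarrow> c < y n)"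
  proof (cases "0 < n")
    case True
    then have "n \<in> {1..n}" by auto
    then have a: "(\<lambda>y::nat\<Rightarrow>real. y n) \<in> borel_measurable (PiM {1..n} (\<lambda>_. lborel))"
      using measurable_component_singleton[of n "{1..n}" "\<lambda>_. lborel"] by simp
    have "Measurable.pred (PiM {1..n} (\<lambda>_. lborel)) (\<lambda>y::nat\<Rightarrow>real. c < y n)"
      using borel_measurable_pred_less[OF _ a, of "\<lambda>_. c"] by simp
    then show ?thesis using True by simp
  qed simp
  show ?thesis unfolding chain_def[abs_def] by (rule pred_intros_logic(3)[OF A B])
qed

lemma chain_merge:
  "chain (Suc n) c (merge {Suc n} {1..n} (x, y)) \<longleftrightarrow> chain n (x (Suc n)) y \<and> c < x (Suc n)"
proof -
  let ?m = "merge {Suc n} {1..n} (x, y)"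
  have m1: "?m (Suc n) = x (Suc n)" by (simp add: merge_def)
  have m2: "\<And>j. j \<in> {1..n} \<Longrightarrow> ?m j = y j" by (simp add: merge_def)
  have A: "(\<forall>j\<in>{1..<Suc n}. ?m (Suc j) < ?m j) \<longleftrightarrow>
        (\<forall>j\<in>{1..<n}. y (Suc j) < y j) \<and> (0 < n \<longrightarrow> x (Suc n) < y n)"
  proof
    assume H: "\<forall>j\<in>{1..<Suc n}. ?m (Suc j) < ?m j"
    show "(\<forall>j\<in>{1..<n}. y (Suc j) < y j) \<and> (0 < n \<longrightarrow> x (Suc n) < y n)"
    proof (intro conjI ballI impI)
      fix j assume j: "j \<in> {1..<n}"
      have jj: "j \<in> {1..<Suc n}" using j by auto
      have "y (Suc j) = ?m (Suc j)" by (rule m2[symmetric]) (use j in auto)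
      also have "\<dots> < ?m j" using H jj by blast
      also have "\<dots> = y j" by (rule m2) (use j in auto)
      finally show "y (Suc j) < y j" .
    next
      assume "0 < n"
      then have jj: "n \<in> {1..<Suc n}" by auto
      have "x (Suc n) = ?m (Suc n)" by (rule m1[symmetric])
      also have "\<dots> < ?m n" using H jj by blast
      also have "\<dots> = y n" by (rule m2) (use \<open>0 < n\<close> in auto)
      finally show "x (Suc n) < y n" .
    qed
  next
    assume H: "(\<forall>j\<in>{1..<n}. y (Suc j) < y j) \<and> (0 < n \<longrightarrow> x (Suc n) < y n)"
    show "\<forall>j\<in>{1..<Suc n}. ?m (Suc j) < ?m j"
    proof
      fix j assume j: "j \<in> {1..<Suc n}"
      show "?m (Suc j) < ?m j"
      proof (cases "j = n")
        case True
        then have n0: "0 < n" using j by auto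
        have "?m (Suc j) = x (Suc n)" using True m1 by simp
        also have "\<dots> < y n" using H n0 by blast
        also have "\<dots> = ?m j" unfolding True by (rule m2[symmetric]) (use n0 in auto)
        finally show ?thesis .
      next
        case False
        then have j': "j \<in> {1..<n}" using j by auto
        have "?m (Suc j) = y (Suc j)" by (rule m2) (use j' in auto)
        also have "\<dots> < y j" using H j' by blast
        also have "\<dots> = ?m j" by (rule m2[symmetric]) (use j' in auto)
        finally show ?thesis .
      qed
    qed
  qed
  show ?thesis unfolding chain_def A using m1 by auto
qed

lemma meas_prod_w[measurable]:
  "(\<lambda>y. \<Prod>j\<in>{1..n}. wgt mu \<sigma> xi (y j)) \<in> borel_measurable (PiM {1..n} (\<lambda>_. lborel))"
proof (rule borel_measurable_prod)
  fix j assume "j \<in> {1..n}"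
  then show "(\<lambda>y. wgt mu \<sigma> xi (y j)) \<in> borel_measurable (PiM {1..n} (\<lambda>_. lborel))"
    by measurable
qed

context
  fixes mu \<sigma> xi :: real
  assumes sig: "\<sigma> > 0"
begin

lemma poly_int:
  assumes "a > 0"
  shows "(\<integral>\<^sup>+t. ennreal (indicator {0<..<a} t * (t ^ n / fact n)) \<partial>lborel) = ennreal (a ^ Suc n / fact (Suc n))"
proof -
  have "(\<integral>\<^sup>+t. ennreal (indicator {0<..<a} t * (t ^ n / fact n)) \<partial>lborel)
      = (\<integral>\<^sup>+t. ennreal (t ^ n / fact n) * indicator {0..a} t \<partial>lborel)"
  proof (rule nn_integral_cong_AE)
    have "AE t in lborel. t \<noteq> 0" by (rule AE_lborel_singleton)
    moreover have "AE t in lborel. t \<noteq> a" by (rule AE_lborel_singleton)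
    ultimately show "AE t in lborel. ennreal (indicator {0<..<a} t * (t ^ n / fact n)) = ennreal (t ^ n / fact n) * indicator {0..a} t"
      by eventually_elim (auto simp: indicator_def)
  qed
  also have "\<dots> = ennreal (a ^ Suc n / fact (Suc n) - 0 ^ Suc n / fact (Suc n))"
  proof (rule nn_integral_FTC_Icc)
    fix x :: real
    have "((\<lambda>t. t ^ Suc n / fact (Suc n)) has_real_derivative (real (Suc n) * x ^ (Suc n - 1)) / fact (Suc n)) (at x)"
      using DERIV_pow[of "Suc n" x UNIV] by (intro DERIV_cdivide) simp
    moreover have "(real (Suc n) * x ^ (Suc n - 1)) / fact (Suc n) = x ^ n / fact n"
      by (simp add: fact_Suc del: of_nat_Suc)
    ultimately show "((\<lambda>t. t ^ Suc n / fact (Suc n)) has_real_derivative x ^ n / fact n) (at x)" by simp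
  qed (use assms in \<open>auto intro!: continuous_intros\<close>)
  finally show ?thesis by simp
qed

lemma Q_lemma:
  assumes "Sp mu \<sigma> xi c"
  shows "(\<integral>\<^sup>+y. ennreal (indicator {y. chain n c y} y * (\<Prod>j\<in>{1..n}. wgt mu \<sigma> xi (y j))) \<partial>PiM {1..n} (\<lambda>_. lborel))
    = ennreal (Tf mu \<sigma> xi c ^ n / fact n)"
  using assms
proof (induction n arbitrary: c)
  case 0
  then show ?case
    by (simp add: PiM_empty nn_integral_count_space_finite chain_def)
next
  case (Suc n c)
  interpret product_sigma_finite "\<lambda>_. lborel :: real measure" by standard
  let ?w = "wgt mu \<sigma> xi" and ?T = "Tf mu \<sigma> xi" and ?S = "Sp mu \<sigma> xi"
  let ?f = "\<lambda>y. ennreal (indicator {y. chain (Suc n) c y} y * (\<Prod>j\<in>{1..Suc n}. ?w (y j)))"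
  have split: "{1..Suc n} = {Suc n} \<union> {1..n}" by auto
  have "(\<integral>\<^sup>+y. ?f y \<partial>PiM {1..Suc n} (\<lambda>_. lborel))
     = (\<integral>\<^sup>+x. (\<integral>\<^sup>+y. ?f (merge {Suc n} {1..n} (x, y)) \<partial>PiM {1..n} (\<lambda>_. lborel)) \<partial>PiM {Suc n} (\<lambda>_. lborel))"
  proof -
    have mf: "?f \<in> borel_measurable (PiM {1..Suc n} (\<lambda>_. lborel))"
      using meas_prod_w[of "Suc n"] by measurable
    show ?thesis unfolding split using mf[unfolded split] by (intro product_nn_integral_fold) auto
  qed
  also have "\<dots> = (\<integral>\<^sup>+x. ennreal (indicator {c<..} (x (Suc n)) * ?w (x (Suc n)) * (?T (x (Suc n)) ^ n / fact n)) \<partial>PiM {Suc n} (\<lambda>_. lborel))"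
  proof (rule nn_integral_cong)
    fix x :: "nat \<Rightarrow> real"
    let ?u = "x (Suc n)"
    have m: "merge {Suc n} {1..n} (x, y) j = (if j = Suc n then ?u else y j)" if "j \<in> {1..Suc n}" for y j
      using that by (auto simp: merge_def)
    have ch: "chain (Suc n) c (merge {Suc n} {1..n} (x, y)) \<longleftrightarrow> chain n ?u y \<and> c < ?u" for y
      by (rule chain_merge)
    have pr: "(\<Prod>j\<in>{1..Suc n}. ?w (merge {Suc n} {1..n} (x, y) j)) = ?w ?u * (\<Prod>j\<in>{1..n}. ?w (y j))" for y
    proof -
      have "(\<Prod>j\<in>{1..Suc n}. ?w (merge {Suc n} {1..n} (x, y) j)) = (\<Prod>j\<in>insert (Suc n) {1..n}. ?w (merge {Suc n} {1..n} (x, y) j))"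
        by (simp add: atLeastAtMostSuc_conv)
      also have "\<dots> = ?w ?u * (\<Prod>j\<in>{1..n}. ?w (y j))"
        by (subst prod.insert) (auto simp: merge_def intro!: prod.cong)
      finally show ?thesis .
    qed
    have "(\<integral>\<^sup>+y. ?f (merge {Suc n} {1..n} (x, y)) \<partial>PiM {1..n} (\<lambda>_. lborel))
       = (\<integral>\<^sup>+y. ennreal (indicator {c<..} ?u * ?w ?u) * ennreal (indicator {y. chain n ?u y} y * (\<Prod>j\<in>{1..n}. ?w (y j))) \<partial>PiM {1..n} (\<lambda>_. lborel))"
    proof (rule nn_integral_cong)
      fix y :: "nat \<Rightarrow> real"
      have nn: "0 \<le> indicator {c<..} ?u * ?w ?u" using wgt_nonneg[OF sig] by simp
      have "ennreal (indicator {c<..} ?u * ?w ?u) * ennreal (indicator {y. chain n ?u y} y * (\<Prod>j\<in>{1..n}. ?w (y j)))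
          = ennreal ((indicator {c<..} ?u * ?w ?u) * (indicator {y. chain n ?u y} y * (\<Prod>j\<in>{1..n}. ?w (y j))))"
        by (rule ennreal_mult'[symmetric, OF nn])
      also have "(indicator {c<..} ?u * ?w ?u) * (indicator {y. chain n ?u y} y * (\<Prod>j\<in>{1..n}. ?w (y j)))
          = indicator {y. chain (Suc n) c y} (merge {Suc n} {1..n} (x, y)) * (\<Prod>j\<in>{1..Suc n}. ?w (merge {Suc n} {1..n} (x, y) j))"
        unfolding pr indicator_def mem_Collect_eq ch by auto
      finally show "?f (merge {Suc n} {1..n} (x, y)) = ennreal (indicator {c<..} ?u * ?w ?u) * ennreal (indicator {y. chain n ?u y} y * (\<Prod>j\<in>{1..n}. ?w (y j)))"
        by simp
    qed
    also have "\<dots> = ennreal (indicator {c<..} ?u * ?w ?u) * (\<integral>\<^sup>+y. ennreal (indicator {y. chain n ?u y} y * (\<Prod>j\<in>{1..n}. ?w (y j))) \<partial>PiM {1..n} (\<lambda>_. lborel))"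
      by (rule nn_integral_cmult) measurable
    also have "\<dots> = ennreal (indicator {c<..} ?u * ?w ?u * (?T ?u ^ n / fact n))"
    proof (cases "?S ?u")
      case True
      then show ?thesis using Suc.IH[OF True]
        by (simp add: ennreal_mult'[symmetric] wgt_nonneg[OF sig] Tf_pos[OF sig] less_imp_le)
    next
      case False
      then show ?thesis using sig by (simp add: wgt_def)
    qed
    finally show "(\<integral>\<^sup>+y. ?f (merge {Suc n} {1..n} (x, y)) \<partial>PiM {1..n} (\<lambda>_. lborel)) = ennreal (indicator {c<..} ?u * ?w ?u * (?T ?u ^ n / fact n))" .
  qed
  also have "\<dots> = (\<integral>\<^sup>+u. ennreal (indicator {c<..} u * ?w u * (?T u ^ n / fact n)) \<partial>lborel)"
    using meas_wgt meas_Tf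
    by (intro product_nn_integral_singleton[where f = "\<lambda>u. ennreal (indicator {c<..} u * ?w u * (?T u ^ n / fact n))"]) measurable
  also have "\<dots> = (\<integral>\<^sup>+u. ennreal (indicator {y. ?S y \<and> ?T y \<in> {0<..<?T c}} u * (?w u * (?T u ^ n / fact n))) \<partial>lborel)"
  proof (rule nn_integral_cong)
    fix u
    show "ennreal (indicator {c<..} u * ?w u * (?T u ^ n / fact n)) = ennreal (indicator {y. ?S y \<and> ?T y \<in> {0<..<?T c}} u * (?w u * (?T u ^ n / fact n)))"
    proof (cases "?S u")
      case True
      then have "indicator {c<..} u = (indicator {y. ?S y \<and> ?T y \<in> {0<..<?T c}} u :: real)"
        using Tf_pos[OF sig True] Tf_less_iff[OF sig Suc.prems True] by (simp add: indicator_def)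
      then show ?thesis by (simp add: mult.assoc)
    next
      case False
      then have "?w u = 0" by (simp add: wgt_def)
      then show ?thesis by simp
    qed
  qed
  also have "\<dots> = (\<integral>\<^sup>+t. ennreal (indicator {0<..<?T c} t * (t ^ n / fact n)) \<partial>lborel)"
    by (rule subst_T[OF sig]) auto
  also have "\<dots> = ennreal (?T c ^ Suc n / fact (Suc n))"
    by (rule poly_int) (rule Tf_pos[OF sig Suc.prems])
  finally show ?case .
qed

end


definition ordr :: "nat \<Rightarrow> (nat \<Rightarrow> real) \<Rightarrow> bool" where
  "ordr r y \<longleftrightarrow> (\<forall>j\<in>{1..<r}. y (Suc j) < y j)"

lemma ordr_chain: "ordr (Suc n) y \<longleftrightarrow> chain n (y (Suc n)) y"
  unfolding ordr_def chain_def by (auto simp: less_Suc_eq)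

lemma dens_eq:
  assumes sig: "\<sigma> > 0"
  shows "gev_r_density r mu \<sigma> xi y
    = indicator {y. ordr r y} y * (exp (- Tf mu \<sigma> xi (y r)) * (\<Prod>j\<in>{1..r}. wgt mu \<sigma> xi (y j)))"
proof (cases "\<forall>j\<in>{1..r}. gev_supp xi (gev_z mu \<sigma> (y j))")
  case True
  let ?h = "\<lambda>j. gev_h xi (gev_z mu \<sigma> (y j))"
  have "(\<Prod>j\<in>{1..r}. wgt mu \<sigma> xi (y j)) = (\<Prod>j\<in>{1..r}. exp (- ?h j) / \<sigma>)"
    using True by (intro prod.cong) (auto simp: wgt_def Sp_def)
  also have "\<dots> = (\<Prod>j\<in>{1..r}. exp (- ?h j)) / \<sigma> ^ r"
    by (simp add: prod_dividef)
  also have "(\<Prod>j\<in>{1..r}. exp (- ?h j)) = exp (- (\<Sum>j\<in>{1..r}. ?h j))"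
    by (subst sum_negf[symmetric], subst exp_sum) simp_all
  finally have P: "(\<Prod>j\<in>{1..r}. wgt mu \<sigma> xi (y j)) = exp (- (\<Sum>j\<in>{1..r}. ?h j)) / \<sigma> ^ r" .
  have "\<sigma> powi (- int r) = 1 / \<sigma> ^ r" by (simp add: power_int_minus divide_inverse)
  moreover have "exp (- Tf mu \<sigma> xi (y r) - (\<Sum>j = 1..r. ?h j)) = exp (- Tf mu \<sigma> xi (y r)) * exp (- (\<Sum>j\<in>{1..r}. ?h j))"
    by (simp add: exp_diff exp_minus divide_inverse)
  ultimately show ?thesis using True P
    by (simp add: gev_r_density_def ordr_def indicator_def Tf_def)
next
  case False
  then obtain j where j: "j \<in> {1..r}" "\<not> Sp mu \<sigma> xi (y j)" by (auto simp: Sp_def)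
  then have Z: "(\<Prod>j\<in>{1..r}. wgt mu \<sigma> xi (y j)) = 0"
    by (intro prod_zero) (auto simp: wgt_def intro!: bexI[of _ j])
  show ?thesis unfolding Z using False by (auto simp: gev_r_density_def)
qed

lemma meas_ordr[measurable]: "Measurable.pred (PiM {1..r} (\<lambda>_. lborel)) (ordr r)"
proof -
  have A: "Measurable.pred (PiM {1..r} (\<lambda>_. lborel)) (\<lambda>y::nat\<Rightarrow>real. \<forall>j\<in>{1..<r}. y (Suc j) < y j)"
  proof (rule pred_intros_finite(3))
    fix j assume j: "j \<in> {1..<r}"
    then have "j \<in> {1..r}" "Suc j \<in> {1..r}" by auto
    then have a: "(\<lambda>y::nat\<Rightarrow>real. y j) \<in> borel_measurable (PiM {1..r} (\<lambda>_. lborel))"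
      and b: "(\<lambda>y::nat\<Rightarrow>real. y (Suc j)) \<in> borel_measurable (PiM {1..r} (\<lambda>_. lborel))"
      using measurable_component_singleton[of j "{1..r}" "\<lambda>_. lborel"]
        measurable_component_singleton[of "Suc j" "{1..r}" "\<lambda>_. lborel"] by simp_all
    show "Measurable.pred (PiM {1..r} (\<lambda>_. lborel)) (\<lambda>y::nat\<Rightarrow>real. y (Suc j) < y j)"
      using borel_measurable_pred_less[OF b a] by simp
  qed simp
  then show ?thesis unfolding ordr_def[abs_def] .
qed

lemma chain_Suc: "chain (Suc n) c z \<longleftrightarrow> chain n (z (Suc n)) z \<and> c < z (Suc n)"
  unfolding chain_def by (auto simp: less_Suc_eq)

lemma chain_cong:
  assumes "\<And>j. j \<in> {1..n} \<Longrightarrow> y j = z j"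
  shows "chain n c y \<longleftrightarrow> chain n c z"
proof -
  have "(\<forall>j\<in>{1..<n}. y (Suc j) < y j) \<longleftrightarrow> (\<forall>j\<in>{1..<n}. z (Suc j) < z j)"
  proof (intro ball_cong refl)
    fix j assume "j \<in> {1..<n}"
    then have "y j = z j" "y (Suc j) = z (Suc j)" using assms by auto
    then show "(y (Suc j) < y j) = (z (Suc j) < z j)" by simp
  qed
  moreover have "(0 < n \<longrightarrow> c < y n) \<longleftrightarrow> (0 < n \<longrightarrow> c < z n)"
    using assms[of n] by auto
  ultimately show ?thesis unfolding chain_def by simp
qed

context
  fixes mu \<sigma> xi :: real
  assumes sig: "\<sigma> > 0"
begin

lemma final_subst:
  assumes G: "G \<in> borel_measurable borel" "\<And>t. 0 < t \<Longrightarrow> 0 \<le> G t"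
  shows "(\<integral>\<^sup>+u. ennreal (wgt mu \<sigma> xi u * G (Tf mu \<sigma> xi u)) \<partial>lborel)
       = (\<integral>\<^sup>+t. ennreal (indicator {0<..} t * G t) \<partial>lborel)"
proof -
  have "(\<integral>\<^sup>+u. ennreal (wgt mu \<sigma> xi u * G (Tf mu \<sigma> xi u)) \<partial>lborel)
      = (\<integral>\<^sup>+u. ennreal (indicator {y. Sp mu \<sigma> xi y \<and> Tf mu \<sigma> xi y \<in> {0<..}} u * (wgt mu \<sigma> xi u * G (Tf mu \<sigma> xi u))) \<partial>lborel)"
  proof (rule nn_integral_cong)
    fix u
    show "ennreal (wgt mu \<sigma> xi u * G (Tf mu \<sigma> xi u)) = ennreal (indicator {y. Sp mu \<sigma> xi y \<and> Tf mu \<sigma> xi y \<in> {0<..}} u * (wgt mu \<sigma> xi u * G (Tf mu \<sigma> xi u)))"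
    proof (cases "Sp mu \<sigma> xi u")
      case True
      then show ?thesis using Tf_pos[OF sig True] by (simp add: indicator_def)
    next
      case False
      then show ?thesis by (simp add: wgt_def)
    qed
  qed
  also have "\<dots> = (\<integral>\<^sup>+t. ennreal (indicator {0<..} t * G t) \<partial>lborel)"
    using G by (intro subst_T[OF sig]) auto
  finally show ?thesis .
qed

lemma exp_tail:
  assumes "a \<ge> 0"
  shows "(\<integral>\<^sup>+t. ennreal (indicator {a<..} t * exp (- t)) \<partial>lborel) = ennreal (exp (- a))"
proof -
  have "(\<integral>\<^sup>+t. ennreal (indicator {a<..} t * exp (- t)) \<partial>lborel)
      = (\<integral>\<^sup>+t. ennreal (exp (- t)) * indicator {a..} t \<partial>lborel)"
  proof (rule nn_integral_cong_AE)
    have "AE t in lborel. t \<noteq> a" by (rule AE_lborel_singleton)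
    then show "AE t in lborel. ennreal (indicator {a<..} t * exp (- t)) = ennreal (exp (- t)) * indicator {a..} t"
      by eventually_elim (auto simp: indicator_def)
  qed
  also have "\<dots> = ennreal (0 - (- exp (- a)))"
  proof (rule nn_integral_FTC_atLeast)
    show "(\<lambda>t::real. exp (- t)) \<in> borel_measurable borel" by (intro borel_measurable_continuous_onI continuous_intros)
    show "\<And>x. a \<le> x \<Longrightarrow> ((\<lambda>t. - exp (- t)) has_real_derivative exp (- x)) (at x)"
      by (auto intro!: derivative_eq_intros)
    show "\<And>x. a \<le> x \<Longrightarrow> 0 \<le> exp (- x)" by simp
    show "((\<lambda>t::real. - exp (- t)) \<longlongrightarrow> 0) at_top"
    proof -
      have "((\<lambda>t::real. exp (- t)) \<longlongrightarrow> 0) at_top"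
        by (rule filterlim_compose[OF exp_at_bot filterlim_uminus_at_bot_at_top])
      from tendsto_minus[OF this] show ?thesis by simp
    qed
  qed
  finally show ?thesis by simp
qed

lemma tail_int:
  assumes c: "Sp mu \<sigma> xi c"
  shows "(\<integral>\<^sup>+v. ennreal (indicator {..<c} v * (exp (- Tf mu \<sigma> xi v) * wgt mu \<sigma> xi v)) \<partial>lborel)
       = ennreal (exp (- Tf mu \<sigma> xi c))"
proof -
  let ?T = "Tf mu \<sigma> xi" and ?S = "Sp mu \<sigma> xi" and ?w = "wgt mu \<sigma> xi"
  have Tc: "?T c > 0" using Tf_pos[OF sig c] .
  have "(\<integral>\<^sup>+v. ennreal (indicator {..<c} v * (exp (- ?T v) * ?w v)) \<partial>lborel)
      = (\<integral>\<^sup>+v. ennreal (indicator {y. ?S y \<and> ?T y \<in> {?T c<..}} v * (?w v * exp (- ?T v))) \<partial>lborel)"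
  proof (rule nn_integral_cong)
    fix v
    show "ennreal (indicator {..<c} v * (exp (- ?T v) * ?w v)) = ennreal (indicator {y. ?S y \<and> ?T y \<in> {?T c<..}} v * (?w v * exp (- ?T v)))"
    proof (cases "?S v")
      case True
      then have "indicator {..<c} v = (indicator {y. ?S y \<and> ?T y \<in> {?T c<..}} v :: real)"
        using Tf_less_iff[OF sig True c] by (simp add: indicator_def)
      then show ?thesis by (simp add: mult.commute)
    next
      case False
      then show ?thesis by (simp add: wgt_def)
    qed
  qed
  also have "\<dots> = (\<integral>\<^sup>+t. ennreal (indicator {?T c<..} t * exp (- t)) \<partial>lborel)"
    using Tc by (intro subst_T[OF sig]) auto
  also have "\<dots> = ennreal (exp (- ?T c))"
    using Tc by (intro exp_tail) simp
  finally show ?thesis .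
qed

end


context
  fixes mu \<sigma> xi :: real
  assumes sig: "\<sigma> > 0"
begin

lemma law_last:
  assumes G: "G \<in> borel_measurable borel" "\<And>t. 0 \<le> G t"
  shows "(\<integral>\<^sup>+y. ennreal (gev_r_density (Suc n) mu \<sigma> xi y * G (Tf mu \<sigma> xi (y (Suc n)))) \<partial>PiM {1..Suc n} (\<lambda>_. lborel))
       = (\<integral>\<^sup>+t. ennreal (indicator {0<..} t * (exp (- t) * G t * (t ^ n / fact n))) \<partial>lborel)"
proof -
  interpret product_sigma_finite "\<lambda>_. lborel :: real measure" by standard
  let ?w = "wgt mu \<sigma> xi" and ?T = "Tf mu \<sigma> xi" and ?S = "Sp mu \<sigma> xi"
  let ?F = "\<lambda>y. ennreal (indicator {y. ordr (Suc n) y} y * (exp (- ?T (y (Suc n))) * (\<Prod>j\<in>{1..Suc n}. ?w (y j))) * G (?T (y (Suc n))))"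
  have split: "{1..Suc n} = {Suc n} \<union> {1..n}" by auto
  have "(\<integral>\<^sup>+y. ennreal (gev_r_density (Suc n) mu \<sigma> xi y * G (?T (y (Suc n)))) \<partial>PiM {1..Suc n} (\<lambda>_. lborel))
      = (\<integral>\<^sup>+y. ?F y \<partial>PiM {1..Suc n} (\<lambda>_. lborel))"
    by (intro nn_integral_cong) (simp add: dens_eq[OF sig])
  also have "\<dots> = (\<integral>\<^sup>+x. (\<integral>\<^sup>+y. ?F (merge {Suc n} {1..n} (x, y)) \<partial>PiM {1..n} (\<lambda>_. lborel)) \<partial>PiM {Suc n} (\<lambda>_. lborel))"
  proof -
    have "Suc n \<in> {1..Suc n}" by simp
    then have a: "(\<lambda>y::nat\<Rightarrow>real. y (Suc n)) \<in> borel_measurable (PiM {1..Suc n} (\<lambda>_. lborel))"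
      using measurable_component_singleton[of "Suc n" "{1..Suc n}" "\<lambda>_. lborel"] by simp
    have mf: "?F \<in> borel_measurable (PiM {1..Suc n} (\<lambda>_. lborel))"
      using a G(1) by measurable
    show ?thesis unfolding split using mf[unfolded split] by (intro product_nn_integral_fold) auto
  qed
  also have "\<dots> = (\<integral>\<^sup>+x. ennreal (exp (- ?T (x (Suc n))) * ?w (x (Suc n)) * G (?T (x (Suc n))) * (?T (x (Suc n)) ^ n / fact n)) \<partial>PiM {Suc n} (\<lambda>_. lborel))"
  proof (rule nn_integral_cong)
    fix x :: "nat \<Rightarrow> real"
    let ?u = "x (Suc n)"
    let ?m = "\<lambda>y. merge {Suc n} {1..n} (x, y)"
    have m1: "?m y (Suc n) = ?u" for y by (simp add: merge_def)
    have m2: "\<And>j. j \<in> {1..n} \<Longrightarrow> ?m y j = y j" for y by (simp add: merge_def)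
    have ch: "ordr (Suc n) (?m y) \<longleftrightarrow> chain n ?u y" for y
      unfolding ordr_chain m1 by (rule chain_cong) (rule m2)
    have pr: "(\<Prod>j\<in>{1..Suc n}. ?w (?m y j)) = ?w ?u * (\<Prod>j\<in>{1..n}. ?w (y j))" for y
    proof -
      have "(\<Prod>j\<in>{1..Suc n}. ?w (?m y j)) = (\<Prod>j\<in>insert (Suc n) {1..n}. ?w (?m y j))"
        by (simp add: atLeastAtMostSuc_conv)
      also have "\<dots> = ?w (?m y (Suc n)) * (\<Prod>j\<in>{1..n}. ?w (?m y j))"
        by (subst prod.insert) auto
      also have "\<dots> = ?w ?u * (\<Prod>j\<in>{1..n}. ?w (y j))"
        unfolding m1 using m2 by (metis (no_types, lifting) prod.cong)
      finally show ?thesis .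
    qed
    let ?c = "exp (- ?T ?u) * ?w ?u * G (?T ?u)"
    have cnn: "0 \<le> ?c" using wgt_nonneg[OF sig] G(2) by simp
    have "(\<integral>\<^sup>+y. ?F (?m y) \<partial>PiM {1..n} (\<lambda>_. lborel))
       = (\<integral>\<^sup>+y. ennreal ?c * ennreal (indicator {y. chain n ?u y} y * (\<Prod>j\<in>{1..n}. ?w (y j))) \<partial>PiM {1..n} (\<lambda>_. lborel))"
    proof (rule nn_integral_cong)
      fix y :: "nat \<Rightarrow> real"
      have "ennreal ?c * ennreal (indicator {y. chain n ?u y} y * (\<Prod>j\<in>{1..n}. ?w (y j)))
          = ennreal (?c * (indicator {y. chain n ?u y} y * (\<Prod>j\<in>{1..n}. ?w (y j))))"
        by (rule ennreal_mult'[symmetric, OF cnn])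
      also have "?c * (indicator {y. chain n ?u y} y * (\<Prod>j\<in>{1..n}. ?w (y j)))
          = indicator {y. ordr (Suc n) y} (?m y) * (exp (- ?T (?m y (Suc n))) * (\<Prod>j\<in>{1..Suc n}. ?w (?m y j))) * G (?T (?m y (Suc n)))"
        unfolding pr m1 indicator_def mem_Collect_eq ch by simp
      finally show "?F (?m y) = ennreal ?c * ennreal (indicator {y. chain n ?u y} y * (\<Prod>j\<in>{1..n}. ?w (y j)))"
        by simp
    qed
    also have "\<dots> = ennreal ?c * (\<integral>\<^sup>+y. ennreal (indicator {y. chain n ?u y} y * (\<Prod>j\<in>{1..n}. ?w (y j))) \<partial>PiM {1..n} (\<lambda>_. lborel))"
      by (rule nn_integral_cmult) measurable
    also have "\<dots> = ennreal (?c * (?T ?u ^ n / fact n))"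
    proof (cases "?S ?u")
      case True
      then show ?thesis using Q_lemma[OF sig True, of n] cnn Tf_pos[OF sig True]
        by (simp add: ennreal_mult'[symmetric])
    next
      case False
      then show ?thesis by (simp add: wgt_def)
    qed
    finally show "(\<integral>\<^sup>+y. ?F (?m y) \<partial>PiM {1..n} (\<lambda>_. lborel)) = ennreal (exp (- ?T ?u) * ?w ?u * G (?T ?u) * (?T ?u ^ n / fact n))" .
  qed
  also have "\<dots> = (\<integral>\<^sup>+u. ennreal (exp (- ?T u) * ?w u * G (?T u) * (?T u ^ n / fact n)) \<partial>lborel)"
  proof -
    have "(\<lambda>u. ennreal (exp (- ?T u) * ?w u * G (?T u) * (?T u ^ n / fact n))) \<in> borel_measurable borel"
      using G(1) by measurable
    then show ?thesis
      by (intro product_nn_integral_singleton[where f = "\<lambda>u. ennreal (exp (- ?T u) * ?w u * G (?T u) * (?T u ^ n / fact n))"])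
        (simp add: measurable_lborel1)
  qed
  also have "\<dots> = (\<integral>\<^sup>+u. ennreal (?w u * (exp (- ?T u) * G (?T u) * (?T u ^ n / fact n))) \<partial>lborel)"
    by (intro nn_integral_cong) (simp add: mult_ac)
  also have "\<dots> = (\<integral>\<^sup>+t. ennreal (indicator {0<..} t * (exp (- t) * G t * (t ^ n / fact n))) \<partial>lborel)"
    using G by (intro final_subst[OF sig]) (auto intro!: mult_nonneg_nonneg divide_nonneg_pos)
  finally show ?thesis .
qed

lemma law_prev:
  assumes G: "G \<in> borel_measurable borel" "\<And>t. 0 \<le> G t"
  shows "(\<integral>\<^sup>+y. ennreal (gev_r_density (Suc (Suc n)) mu \<sigma> xi y * G (Tf mu \<sigma> xi (y (Suc n)))) \<partial>PiM {1..Suc (Suc n)} (\<lambda>_. lborel))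
       = (\<integral>\<^sup>+t. ennreal (indicator {0<..} t * (exp (- t) * G t * (t ^ n / fact n))) \<partial>lborel)"
proof -
  interpret product_sigma_finite "\<lambda>_. lborel :: real measure" by standard
  let ?w = "wgt mu \<sigma> xi" and ?T = "Tf mu \<sigma> xi" and ?S = "Sp mu \<sigma> xi"
  let ?I = "{Suc n, Suc (Suc n)}"
  let ?F = "\<lambda>y. ennreal (indicator {y. ordr (Suc (Suc n)) y} y * (exp (- ?T (y (Suc (Suc n)))) * (\<Prod>j\<in>{1..Suc (Suc n)}. ?w (y j))) * G (?T (y (Suc n))))"
  let ?K = "\<lambda>u. ?w u * G (?T u) * (?T u ^ n / fact n)"
  have Knn: "0 \<le> ?K u" for u
  proof (cases "?S u")
    case True
    then have "0 \<le> ?T u" using Tf_pos[OF sig True] by simp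
    then show ?thesis using wgt_nonneg[OF sig, of mu xi u] G(2)[of "?T u"]
      by (intro mult_nonneg_nonneg divide_nonneg_pos zero_le_power) auto
  next
    case False
    then show ?thesis by (simp add: wgt_def)
  qed
  have split: "{1..Suc (Suc n)} = ?I \<union> {1..n}" by auto
  have "(\<integral>\<^sup>+y. ennreal (gev_r_density (Suc (Suc n)) mu \<sigma> xi y * G (?T (y (Suc n)))) \<partial>PiM {1..Suc (Suc n)} (\<lambda>_. lborel))
      = (\<integral>\<^sup>+y. ?F y \<partial>PiM {1..Suc (Suc n)} (\<lambda>_. lborel))"
    by (intro nn_integral_cong) (simp add: dens_eq[OF sig])
  also have "\<dots> = (\<integral>\<^sup>+x. (\<integral>\<^sup>+y. ?F (merge ?I {1..n} (x, y)) \<partial>PiM {1..n} (\<lambda>_. lborel)) \<partial>PiM ?I (\<lambda>_. lborel))"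
  proof -
    have "Suc n \<in> {1..Suc (Suc n)}" "Suc (Suc n) \<in> {1..Suc (Suc n)}" by simp_all
    then have a: "(\<lambda>y::nat\<Rightarrow>real. y (Suc n)) \<in> borel_measurable (PiM {1..Suc (Suc n)} (\<lambda>_. lborel))"
      and b: "(\<lambda>y::nat\<Rightarrow>real. y (Suc (Suc n))) \<in> borel_measurable (PiM {1..Suc (Suc n)} (\<lambda>_. lborel))"
      using measurable_component_singleton[of "Suc n" "{1..Suc (Suc n)}" "\<lambda>_. lborel"]
        measurable_component_singleton[of "Suc (Suc n)" "{1..Suc (Suc n)}" "\<lambda>_. lborel"] by simp_all
    have mf: "?F \<in> borel_measurable (PiM {1..Suc (Suc n)} (\<lambda>_. lborel))"
      using a b G(1) by measurable
    show ?thesis unfolding split using mf[unfolded split] by (intro product_nn_integral_fold) auto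
  qed
  also have "\<dots> = (\<integral>\<^sup>+x. ennreal (indicator {..<x (Suc n)} (x (Suc (Suc n))) * exp (- ?T (x (Suc (Suc n)))) * ?w (x (Suc (Suc n))) * ?K (x (Suc n))) \<partial>PiM ?I (\<lambda>_. lborel))"
  proof (rule nn_integral_cong)
    fix x :: "nat \<Rightarrow> real"
    let ?u = "x (Suc n)" and ?v = "x (Suc (Suc n))"
    let ?m = "\<lambda>y. merge ?I {1..n} (x, y)"
    have m1: "?m y (Suc n) = ?u" for y by (simp add: merge_def)
    have m1': "?m y (Suc (Suc n)) = ?v" for y by (simp add: merge_def)
    have m2: "\<And>j. j \<in> {1..n} \<Longrightarrow> ?m y j = y j" for y by (simp add: merge_def)
    have ch: "ordr (Suc (Suc n)) (?m y) \<longleftrightarrow> chain n ?u y \<and> ?v < ?u" for y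
    proof -
      have "ordr (Suc (Suc n)) (?m y) \<longleftrightarrow> chain (Suc n) ?v (?m y)" unfolding ordr_chain m1' ..
      also have "\<dots> \<longleftrightarrow> chain n ?u (?m y) \<and> ?v < ?u" unfolding chain_Suc m1 ..
      also have "chain n ?u (?m y) \<longleftrightarrow> chain n ?u y" by (rule chain_cong) (rule m2)
      finally show ?thesis .
    qed
    have pr: "(\<Prod>j\<in>{1..Suc (Suc n)}. ?w (?m y j)) = ?w ?v * (?w ?u * (\<Prod>j\<in>{1..n}. ?w (y j)))" for y
    proof -
      have "(\<Prod>j\<in>{1..Suc (Suc n)}. ?w (?m y j)) = (\<Prod>j\<in>insert (Suc (Suc n)) (insert (Suc n) {1..n}). ?w (?m y j))"
        by (simp add: atLeastAtMostSuc_conv)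
      also have "\<dots> = ?w (?m y (Suc (Suc n))) * (?w (?m y (Suc n)) * (\<Prod>j\<in>{1..n}. ?w (?m y j)))"
        by (simp add: prod.insert)
      also have "\<dots> = ?w ?v * (?w ?u * (\<Prod>j\<in>{1..n}. ?w (y j)))"
        unfolding m1 m1' using m2 by (metis (no_types, lifting) prod.cong)
      finally show ?thesis .
    qed
    let ?c = "indicator {..<?u} ?v * exp (- ?T ?v) * ?w ?v * ?w ?u * G (?T ?u)"
    have cnn: "0 \<le> ?c" using wgt_nonneg[OF sig] G(2) by simp
    have "(\<integral>\<^sup>+y. ?F (?m y) \<partial>PiM {1..n} (\<lambda>_. lborel))
       = (\<integral>\<^sup>+y. ennreal ?c * ennreal (indicator {y. chain n ?u y} y * (\<Prod>j\<in>{1..n}. ?w (y j))) \<partial>PiM {1..n} (\<lambda>_. lborel))"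
    proof (rule nn_integral_cong)
      fix y :: "nat \<Rightarrow> real"
      have "ennreal ?c * ennreal (indicator {y. chain n ?u y} y * (\<Prod>j\<in>{1..n}. ?w (y j)))
          = ennreal (?c * (indicator {y. chain n ?u y} y * (\<Prod>j\<in>{1..n}. ?w (y j))))"
        by (rule ennreal_mult'[symmetric, OF cnn])
      also have "?c * (indicator {y. chain n ?u y} y * (\<Prod>j\<in>{1..n}. ?w (y j)))
          = indicator {y. ordr (Suc (Suc n)) y} (?m y) * (exp (- ?T (?m y (Suc (Suc n)))) * (\<Prod>j\<in>{1..Suc (Suc n)}. ?w (?m y j))) * G (?T (?m y (Suc n)))"
        unfolding pr m1 m1' indicator_def mem_Collect_eq ch by auto
      finally show "?F (?m y) = ennreal ?c * ennreal (indicator {y. chain n ?u y} y * (\<Prod>j\<in>{1..n}. ?w (y j)))"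
        by simp
    qed
    also have "\<dots> = ennreal ?c * (\<integral>\<^sup>+y. ennreal (indicator {y. chain n ?u y} y * (\<Prod>j\<in>{1..n}. ?w (y j))) \<partial>PiM {1..n} (\<lambda>_. lborel))"
      by (rule nn_integral_cmult) measurable
    also have "\<dots> = ennreal (indicator {..<?u} ?v * exp (- ?T ?v) * ?w ?v * ?K ?u)"
    proof (cases "?S ?u")
      case True
      then show ?thesis using Q_lemma[OF sig True, of n] cnn Tf_pos[OF sig True]
        by (simp add: ennreal_mult'[symmetric] mult_ac)
    next
      case False
      then show ?thesis by (simp add: wgt_def)
    qed
    finally show "(\<integral>\<^sup>+y. ?F (?m y) \<partial>PiM {1..n} (\<lambda>_. lborel)) = ennreal (indicator {..<?u} ?v * exp (- ?T ?v) * ?w ?v * ?K ?u)" .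
  qed
  also have "\<dots> = (\<integral>\<^sup>+x. (\<integral>\<^sup>+v. ennreal (indicator {..<x (Suc n)} v * exp (- ?T v) * ?w v * ?K (x (Suc n))) \<partial>lborel) \<partial>PiM {Suc n} (\<lambda>_. lborel))"
  proof -
    have ins: "?I = insert (Suc (Suc n)) {Suc n}" by auto
    have "Suc n \<in> ?I" "Suc (Suc n) \<in> ?I" by simp_all
    then have a: "(\<lambda>y::nat\<Rightarrow>real. y (Suc n)) \<in> borel_measurable (PiM ?I (\<lambda>_. lborel))"
      and b: "(\<lambda>y::nat\<Rightarrow>real. y (Suc (Suc n))) \<in> borel_measurable (PiM ?I (\<lambda>_. lborel))"
      using measurable_component_singleton[of "Suc n" "?I" "\<lambda>_. lborel"]
        measurable_component_singleton[of "Suc (Suc n)" "?I" "\<lambda>_. lborel"] by simp_all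
    have mf: "(\<lambda>x. ennreal (indicator {..<x (Suc n)} (x (Suc (Suc n))) * exp (- ?T (x (Suc (Suc n)))) * ?w (x (Suc (Suc n))) * ?K (x (Suc n)))) \<in> borel_measurable (PiM ?I (\<lambda>_. lborel))"
    proof -
      have e: "\<And>a b::real. (indicator {..<a} b :: real) = of_bool (b < a)"
        by (auto simp: indicator_def)
      show ?thesis unfolding e using a b G(1) by measurable
    qed
    have "(\<integral>\<^sup>+x. ennreal (indicator {..<x (Suc n)} (x (Suc (Suc n))) * exp (- ?T (x (Suc (Suc n)))) * ?w (x (Suc (Suc n))) * ?K (x (Suc n))) \<partial>PiM ?I (\<lambda>_. lborel))
      = (\<integral>\<^sup>+x. (\<integral>\<^sup>+v. ennreal (indicator {..<(x(Suc (Suc n) := v)) (Suc n)} ((x(Suc (Suc n) := v)) (Suc (Suc n))) * exp (- ?T ((x(Suc (Suc n) := v)) (Suc (Suc n)))) * ?w ((x(Suc (Suc n) := v)) (Suc (Suc n))) * ?K ((x(Suc (Suc n) := v)) (Suc n))) \<partial>lborel) \<partial>PiM {Suc n} (\<lambda>_. lborel))"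
      unfolding ins by (rule product_nn_integral_insert) (use mf[unfolded ins] in auto)
    then show ?thesis by simp
  qed
  also have "\<dots> = (\<integral>\<^sup>+x. ennreal (?K (x (Suc n)) * exp (- ?T (x (Suc n)))) \<partial>PiM {Suc n} (\<lambda>_. lborel))"
  proof (rule nn_integral_cong)
    fix x :: "nat \<Rightarrow> real"
    let ?u = "x (Suc n)"
    have "(\<integral>\<^sup>+v. ennreal (indicator {..<?u} v * exp (- ?T v) * ?w v * ?K ?u) \<partial>lborel)
        = (\<integral>\<^sup>+v. ennreal (?K ?u) * ennreal (indicator {..<?u} v * (exp (- ?T v) * ?w v)) \<partial>lborel)"
      by (intro nn_integral_cong, subst ennreal_mult'[symmetric, OF Knn]) (simp add: mult_ac)
    also have "\<dots> = ennreal (?K ?u) * (\<integral>\<^sup>+v. ennreal (indicator {..<?u} v * (exp (- ?T v) * ?w v)) \<partial>lborel)"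
      by (rule nn_integral_cmult) measurable
    also have "\<dots> = ennreal (?K ?u * exp (- ?T ?u))"
    proof (cases "?S ?u")
      case True
      then show ?thesis using tail_int[OF sig True] Knn by (simp add: ennreal_mult'[symmetric])
    next
      case False
      then show ?thesis by (simp add: wgt_def)
    qed
    finally show "(\<integral>\<^sup>+v. ennreal (indicator {..<?u} v * exp (- ?T v) * ?w v * ?K ?u) \<partial>lborel) = ennreal (?K ?u * exp (- ?T ?u))" .
  qed
  also have "\<dots> = (\<integral>\<^sup>+u. ennreal (?K u * exp (- ?T u)) \<partial>lborel)"
  proof -
    have "(\<lambda>u. ennreal (?K u * exp (- ?T u))) \<in> borel_measurable borel"
      using G(1) by measurable
    then show ?thesis
      by (intro product_nn_integral_singleton[where f = "\<lambda>u. ennreal (?K u * exp (- ?T u))"])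
        (simp add: measurable_lborel1)
  qed
  also have "\<dots> = (\<integral>\<^sup>+u. ennreal (?w u * (exp (- ?T u) * G (?T u) * (?T u ^ n / fact n))) \<partial>lborel)"
    by (intro nn_integral_cong) (simp add: mult_ac)
  also have "\<dots> = (\<integral>\<^sup>+t. ennreal (indicator {0<..} t * (exp (- t) * G t * (t ^ n / fact n))) \<partial>lborel)"
    using G by (intro final_subst[OF sig]) (auto intro!: mult_nonneg_nonneg divide_nonneg_pos)
  finally show ?thesis .
qed

end


abbreviation "erl k t \<equiv> erlang_density k 1 t"

lemma erl_nonneg: "0 \<le> erl k t" by simp

lemma erl_moment:
  "integrable lborel (\<lambda>t. erl k t * t ^ i)" "(\<integral>t. erl k t * t ^ i \<partial>lborel) = fact (k + i) / fact k"
proof -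
  have nn: "(\<integral>\<^sup>+ x. ennreal (erl k x * x ^ i) \<partial>lborel) = ennreal (fact (k + i) / fact k)"
    using nn_integral_erlang_ith_moment[of 1 k i] by (simp add: divide_ennreal ennreal_fact)
  have pos: "0 \<le> erl k x * x ^ i" for x
    by (cases "x < 0") (auto simp: erlang_density_def)
  show int: "integrable lborel (\<lambda>t. erl k t * t ^ i)"
    using nn pos by (intro integrableI_nonneg) auto
  have "ennreal (\<integral>t. erl k t * t ^ i \<partial>lborel) = ennreal (fact (k + i) / fact k)"
    using nn_integral_eq_integral[OF int] pos nn by simp
  then show "(\<integral>t. erl k t * t ^ i \<partial>lborel) = fact (k + i) / fact k"
    using pos by (subst (asm) ennreal_inj) (auto intro!: integral_nonneg_AE divide_nonneg_pos)
qed

lemma erl_int: "integrable lborel (\<lambda>t. erl k t)"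
  using erl_moment(1)[of k 0] by simp

lemma erl_zero: "t \<le> 0 \<Longrightarrow> erl (Suc m) t = 0"
  by (cases "t < 0") (auto simp: erlang_density_def)

lemma erl_div: "erl (Suc m) t * (1 / t) \<le> erl m t"
proof (cases "t > 0")
  case True
  have "erl (Suc m) t * (1 / t) = t ^ m * exp (- t) / (real (Suc m) * fact m)"
    using True by (simp add: erlang_density_def field_simps)
  also have "\<dots> \<le> t ^ m * exp (- t) / fact m"
    using True by (intro divide_left_mono) auto
  also have "\<dots> = erl m t" using True by (simp add: erlang_density_def)
  finally show ?thesis .
next
  case False
  then show ?thesis by (simp add: erl_zero)
qed

lemma ln_abs_bound: "(t::real) > 0 \<Longrightarrow> \<bar>ln t\<bar> \<le> 1 / t + t"
proof -
  assume t: "t > 0"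
  have "ln t \<le> t - 1" using ln_le_minus_one[OF t] .
  moreover have "- ln t \<le> 1 / t - 1"
    using ln_le_minus_one[of "1 / t"] t by (simp add: ln_div)
  moreover have "0 < 1 / t" using t by simp
  ultimately show ?thesis using t by linarith
qed

lemma ln_sq_bound: "(t::real) > 0 \<Longrightarrow> (ln t)\<^sup>2 \<le> 4 / t + t\<^sup>2"
proof -
  assume t: "t > 0"
  show ?thesis
  proof (cases "t \<ge> 1")
    case True
    then have "0 \<le> ln t" "ln t \<le> t" using ln_le_minus_one[OF t] by auto
    then have "(ln t)\<^sup>2 \<le> t\<^sup>2" by (intro power_mono) auto
    moreover have "0 \<le> 4 / t" using t by simp
    ultimately show ?thesis by linarith
  next
    case False
    have s: "sqrt t > 0" using t by simp
    have "ln t = 2 * ln (sqrt t)" using t by (simp add: ln_sqrt)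
    moreover have "- ln (sqrt t) \<le> 1 / sqrt t"
      using ln_le_minus_one[of "1 / sqrt t"] s by (simp add: ln_div)
    moreover have "ln (sqrt t) \<le> 0" using False t by simp
    ultimately have "0 \<le> - ln t" "- ln t \<le> 2 / sqrt t" by auto
    then have "(- ln t)\<^sup>2 \<le> (2 / sqrt t)\<^sup>2" by (intro power_mono) auto
    also have "(2 / sqrt t)\<^sup>2 = 4 / t" using t by (simp add: power_divide)
    finally have "(ln t)\<^sup>2 \<le> 4 / t" by simp
    moreover have "0 \<le> t\<^sup>2" by simp
    ultimately show ?thesis by linarith
  qed
qed

lemma powr_quot_bound:
  fixes t h :: real
  assumes t: "t > 0" and h: "0 < h" "h \<le> 1"
  shows "\<bar>(t powr h - 1) / h\<bar> \<le> \<bar>ln t\<bar> * (1 + t)"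
proof -
  define x where "x = h * ln t"
  have e: "t powr h = exp x" using t by (simp add: powr_def x_def mult.commute)
  show ?thesis
  proof (cases "t \<ge> 1")
    case True
    then have lt: "0 \<le> ln t" by simp
    then have x0: "0 \<le> x" using h by (simp add: x_def)
    have "exp x - 1 \<le> x * exp x"
    proof -
      have "1 + (- x) \<le> exp (- x)" by (rule exp_ge_add_one_self)
      then have "(1 - x) * exp x \<le> exp (- x) * exp x" by (intro mult_right_mono) auto
      then show ?thesis by (simp add: exp_minus field_simps)
    qed
    moreover have "exp x \<le> t"
    proof -
      have "t powr h \<le> t powr 1" by (rule powr_mono) (use h True in auto)
      then show ?thesis using e t by simp
    qed
    ultimately have "exp x - 1 \<le> x * t"
      using x0 mult_left_mono[of "exp x" t x] by linarith
    then have a: "exp x - 1 \<le> h * (ln t * t)" by (simp add: x_def mult_ac)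
    have b: "0 \<le> exp x - 1" using x0 by simp
    have "\<bar>(exp x - 1) / h\<bar> = (exp x - 1) / h" using b h by simp
    also have "\<dots> \<le> ln t * t" using a h by (simp add: pos_divide_le_eq mult.commute)
    also have "\<dots> \<le> \<bar>ln t\<bar> * (1 + t)" using lt t by (simp add: algebra_simps)
    finally show ?thesis unfolding e .
  next
    case False
    then have lt: "ln t < 0" using t by simp
    then have x0: "x \<le> 0" using h by (simp add: x_def mult_nonneg_nonpos)
    have "1 + x \<le> exp x" by (rule exp_ge_add_one_self)
    moreover have "exp x \<le> 1" using x0 by simp
    ultimately have "\<bar>exp x - 1\<bar> \<le> - x" by linarith
    then have "\<bar>exp x - 1\<bar> \<le> h * \<bar>ln t\<bar>" using lt h by (simp add: x_def)
    then have "\<bar>(exp x - 1) / h\<bar> \<le> \<bar>ln t\<bar>" using h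
      by (simp add: abs_div pos_divide_le_eq mult.commute)
    also have "\<bar>ln t\<bar> \<le> \<bar>ln t\<bar> * (1 + t)" using t by (simp add: algebra_simps)
    finally show ?thesis unfolding e .
  qed
qed


lemma erl_w_bound:
  "\<bar>erl (Suc m) t * (\<bar>ln t\<bar> * (1 + t))\<bar>
     \<le> erl m t + erl (Suc m) t + erl (Suc m) t * t ^ 1 + erl (Suc m) t * t ^ 2"
proof (cases "t > 0")
  case True
  have e: "0 \<le> erl (Suc m) t" by simp
  have "\<bar>erl (Suc m) t * (\<bar>ln t\<bar> * (1 + t))\<bar> = erl (Suc m) t * (\<bar>ln t\<bar> * (1 + t))"
    using True by simp
  also have "\<dots> \<le> erl (Suc m) t * ((1 / t + t) * (1 + t))"
    using ln_abs_bound[OF True] True e by (intro mult_left_mono mult_right_mono) auto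
  also have "\<dots> = erl (Suc m) t * (1 / t) + erl (Suc m) t + erl (Suc m) t * t ^ 1 + erl (Suc m) t * t ^ 2"
    using True by (simp add: field_simps power2_eq_square)
  also have "\<dots> \<le> erl m t + erl (Suc m) t + erl (Suc m) t * t ^ 1 + erl (Suc m) t * t ^ 2"
    using erl_div[of m t] by simp
  finally show ?thesis .
next
  case False
  then show ?thesis by (simp add: erl_zero)
qed

lemma erl_ln_sq_bound:
  "\<bar>erl (Suc m) t * (ln t)\<^sup>2\<bar> \<le> 4 * erl m t + erl (Suc m) t * t ^ 2"
proof (cases "t > 0")
  case True
  have e: "0 \<le> erl (Suc m) t" by simp
  have "\<bar>erl (Suc m) t * (ln t)\<^sup>2\<bar> = erl (Suc m) t * (ln t)\<^sup>2" by simp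
  also have "\<dots> \<le> erl (Suc m) t * (4 / t + t\<^sup>2)"
    using ln_sq_bound[OF True] e by (intro mult_left_mono) auto
  also have "\<dots> = 4 * (erl (Suc m) t * (1 / t)) + erl (Suc m) t * t ^ 2"
    by (simp add: field_simps)
  also have "\<dots> \<le> 4 * erl m t + erl (Suc m) t * t ^ 2"
    using erl_div[of m t] by simp
  finally show ?thesis .
next
  case False
  then show ?thesis by (simp add: erl_zero)
qed

lemma erl_w_int: "integrable lborel (\<lambda>t. erl (Suc m) t * (\<bar>ln t\<bar> * (1 + t)))"
proof (rule Bochner_Integration.integrable_bound)
  show "integrable lborel (\<lambda>t. erl m t + erl (Suc m) t + erl (Suc m) t * t ^ 1 + erl (Suc m) t * t ^ 2)"
    by (intro Bochner_Integration.integrable_add erl_int erl_moment(1))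
  show "(\<lambda>t. erl (Suc m) t * (\<bar>ln t\<bar> * (1 + t))) \<in> borel_measurable lborel" by measurable
  show "AE t in lborel. norm (erl (Suc m) t * (\<bar>ln t\<bar> * (1 + t)))
     \<le> norm (erl m t + erl (Suc m) t + erl (Suc m) t * t ^ 1 + erl (Suc m) t * t ^ 2)"
  proof (rule AE_I2)
    fix t :: real
    have "0 \<le> erl m t + erl (Suc m) t + erl (Suc m) t * t ^ 1 + erl (Suc m) t * t ^ 2"
      using erl_w_bound[of m t] by linarith
    then show "norm (erl (Suc m) t * (\<bar>ln t\<bar> * (1 + t)))
     \<le> norm (erl m t + erl (Suc m) t + erl (Suc m) t * t ^ 1 + erl (Suc m) t * t ^ 2)"
      using erl_w_bound[of m t] by simp
  qed
qed

lemma erl_ln_int: "integrable lborel (\<lambda>t. erl (Suc m) t * ln t)"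
proof (rule Bochner_Integration.integrable_bound[OF erl_w_int[of m]])
  show "(\<lambda>t. erl (Suc m) t * ln t) \<in> borel_measurable lborel" by measurable
  show "AE t in lborel. norm (erl (Suc m) t * ln t) \<le> norm (erl (Suc m) t * (\<bar>ln t\<bar> * (1 + t)))"
  proof (rule AE_I2)
    fix t :: real
    show "norm (erl (Suc m) t * ln t) \<le> norm (erl (Suc m) t * (\<bar>ln t\<bar> * (1 + t)))"
    proof (cases "t > 0")
      case True
      then have "\<bar>ln t\<bar> \<le> \<bar>ln t\<bar> * (1 + t)" by (simp add: algebra_simps)
      then show ?thesis using True by (simp add: abs_mult mult_left_mono)
    next
      case False
      then show ?thesis by (simp add: erl_zero)
    qed
  qed
qed

lemma erl_ln_sq_int: "integrable lborel (\<lambda>t. erl (Suc m) t * (ln t)\<^sup>2)"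
proof (rule Bochner_Integration.integrable_bound)
  show "integrable lborel (\<lambda>t. 4 * erl m t + erl (Suc m) t * t ^ 2)"
    by (intro Bochner_Integration.integrable_add Bochner_Integration.integrable_mult_right erl_int erl_moment(1))
  show "(\<lambda>t. erl (Suc m) t * (ln t)\<^sup>2) \<in> borel_measurable lborel" by measurable
  show "AE t in lborel. norm (erl (Suc m) t * (ln t)\<^sup>2) \<le> norm (4 * erl m t + erl (Suc m) t * t ^ 2)"
  proof (rule AE_I2)
    fix t :: real
    have "0 \<le> 4 * erl m t + erl (Suc m) t * t ^ 2"
      using erl_ln_sq_bound[of m t] by linarith
    then show "norm (erl (Suc m) t * (ln t)\<^sup>2) \<le> norm (4 * erl m t + erl (Suc m) t * t ^ 2)"
      using erl_ln_sq_bound[of m t] by simp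
  qed
qed

lemma Gamma_int:
  assumes x: "x > (0::real)"
  shows "integrable lborel (\<lambda>t. indicator {0..} t * t powr (x - 1) / exp t)"
    "(\<integral>t. indicator {0..} t * t powr (x - 1) / exp t \<partial>lborel) = Gamma x"
proof -
  have nn: "(\<integral>\<^sup>+t. ennreal (indicator {0..} t * t powr (x - 1) / exp t) \<partial>lborel) = ennreal (Gamma x)"
    using Gamma_conv_nn_integral_real[OF x] by simp
  have pos: "0 \<le> indicator {0..} t * t powr (x - 1) / exp t" for t :: real
    by (simp add: indicator_def)
  show int: "integrable lborel (\<lambda>t. indicator {0..} t * t powr (x - 1) / exp t)"
    using nn pos by (intro integrableI_nonneg) auto
  have "ennreal (\<integral>t. indicator {0..} t * t powr (x - 1) / exp t \<partial>lborel) = ennreal (Gamma x)"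
    using nn_integral_eq_integral[OF int] pos nn by simp
  moreover have "0 \<le> Gamma x" using x by (simp add: Gamma_real_pos less_imp_le)
  moreover have "0 \<le> (\<integral>t. indicator {0..} t * t powr (x - 1) / exp t \<partial>lborel)"
    using pos by (intro integral_nonneg_AE) auto
  ultimately show "(\<integral>t. indicator {0..} t * t powr (x - 1) / exp t \<partial>lborel) = Gamma x"
    by simp
qed

lemma erl_powr:
  assumes h: "h \<ge> 0"
  shows "integrable lborel (\<lambda>t. erl (Suc m) t * t powr h)"
    "(\<integral>t. erl (Suc m) t * t powr h \<partial>lborel) = Gamma (real (Suc m) + 1 + h) / fact (Suc m)"
proof -
  let ?x = "real (Suc m) + 1 + h"
  have eq: "erl (Suc m) t * t powr h = (indicator {0..} t * t powr (?x - 1) / exp t) / fact (Suc m)" for t :: real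
  proof (cases "t > 0")
    case True
    have "?x - 1 = real (Suc m) + h" by simp
    then have "t powr (?x - 1) = t powr (real (Suc m)) * t powr h"
      by (simp only: powr_add)
    also have "t powr (real (Suc m)) = t ^ Suc m" by (rule powr_realpow[OF True])
    finally have "t ^ Suc m * t powr h = t powr (?x - 1)" by simp
    then show ?thesis using True
      by (simp add: erlang_density_def exp_minus field_simps del: of_nat_Suc)
  next
    case False
    then show ?thesis by (auto simp: erl_zero indicator_def)
  qed
  have x: "?x > 0" using h by simp
  show "integrable lborel (\<lambda>t. erl (Suc m) t * t powr h)"
    unfolding eq by (intro Bochner_Integration.integrable_divide Gamma_int(1)[OF x])
  show "(\<integral>t. erl (Suc m) t * t powr h \<partial>lborel) = Gamma ?x / fact (Suc m)"
    by (simp only: eq integral_divide_zero Gamma_int(2)[OF x])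
qed


lemma hs_lim: "filterlim (\<lambda>j. inverse (real (Suc j))) (at (0::real)) sequentially"
  unfolding filterlim_at using LIMSEQ_inverse_real_of_nat by simp

lemma erl_ln_integral:
  "(\<integral>t. erl (Suc m) t * ln t \<partial>lborel) = Digamma (real (Suc m) + 1)"
proof -
  let ?k = "Suc m"
  define s where "s = real ?k + 1"
  define hs where "hs = (\<lambda>j. inverse (real (Suc j)))"
  have hpos: "0 < hs j" "hs j \<le> 1" for j by (auto simp: hs_def field_simps)
  define sq where "sq = (\<lambda>j t. erl ?k t * ((t powr hs j - 1) / hs j))"
  have s0: "s > 0" by (simp add: s_def)
  have Gs: "Gamma s = fact ?k" unfolding s_def using Gamma_fact[of ?k] by (simp add: add.commute)
  have int1: "(\<integral>t. erl ?k t \<partial>lborel) = 1" using erl_moment(2)[of ?k 0] by simp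
  have sq_eq: "(\<integral>t. sq j t \<partial>lborel) = ((Gamma (s + hs j) - Gamma s) / hs j) / fact ?k" for j
  proof -
    have a: "sq j = (\<lambda>t. (erl ?k t * t powr hs j - erl ?k t) / hs j)"
      by (auto simp: sq_def fun_eq_iff field_simps)
    have "(\<integral>t. sq j t \<partial>lborel) = ((\<integral>t. erl ?k t * t powr hs j \<partial>lborel) - (\<integral>t. erl ?k t \<partial>lborel)) / hs j"
      unfolding a using erl_powr(1)[of "hs j" m] erl_int[of ?k] hpos(1)[of j]
      by (simp add: less_imp_le)
    also have "\<dots> = (Gamma (s + hs j) / fact ?k - 1) / hs j"
      using erl_powr(2)[of "hs j" m] hpos(1)[of j] int1 by (simp add: s_def less_imp_le add.assoc)
    also have "\<dots> = ((Gamma (s + hs j) - Gamma s) / hs j) / fact ?k"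
    proof -
      have gen: "\<And>G F h::real. F > 0 \<Longrightarrow> h > 0 \<Longrightarrow> (G / F - 1) / h = ((G - F) / h) / F"
        by (simp add: field_simps)
      have F: "(fact ?k :: real) > 0" by (rule fact_gt_zero)
      show ?thesis by (subst Gs, rule gen[OF F hpos(1)])
    qed
    finally show ?thesis .
  qed
  have lim1: "(\<lambda>j. (\<integral>t. sq j t \<partial>lborel)) \<longlonglongrightarrow> (Gamma s * Digamma s) / fact ?k"
  proof -
    have ni: "s \<notin> \<int>\<^sub>\<le>\<^sub>0" using s0 by (auto dest: nonpos_Ints_nonpos)
    have "((\<lambda>h. (Gamma (s + h) - Gamma s) / h) \<longlongrightarrow> Gamma s * Digamma s) (at 0)"
      by (rule DERIV_D[OF has_field_derivative_Gamma[OF ni]])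
    then have "(\<lambda>j. (Gamma (s + hs j) - Gamma s) / hs j) \<longlonglongrightarrow> Gamma s * Digamma s"
      unfolding hs_def by (rule filterlim_compose[OF _ hs_lim])
    then show ?thesis unfolding sq_eq by (intro tendsto_divide) auto
  qed
  have lim2: "(\<lambda>j. (\<integral>t. sq j t \<partial>lborel)) \<longlonglongrightarrow> (\<integral>t. erl ?k t * ln t \<partial>lborel)"
  proof (rule integral_dominated_convergence[where w = "\<lambda>t. erl ?k t * (\<bar>ln t\<bar> * (1 + t))"])
    show "(\<lambda>t. erl ?k t * ln t) \<in> borel_measurable lborel" by measurable
    show "\<And>j. sq j \<in> borel_measurable lborel" unfolding sq_def by measurable
    show "integrable lborel (\<lambda>t. erl ?k t * (\<bar>ln t\<bar> * (1 + t)))" by (rule erl_w_int)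
    show "AE t in lborel. (\<lambda>j. sq j t) \<longlonglongrightarrow> erl ?k t * ln t"
    proof (rule AE_I2)
      fix t :: real
      show "(\<lambda>j. sq j t) \<longlonglongrightarrow> erl ?k t * ln t"
      proof (cases "t > 0")
        case True
        have "((\<lambda>h. t powr h) has_real_derivative (t powr 0 * (1 * ln t + 0 * 0 / t))) (at 0)"
          using DERIV_powr[of "\<lambda>_. t" 0 0 "\<lambda>h. h" 1] True by (simp add: DERIV_ident DERIV_const)
        then have "((\<lambda>h. t powr h) has_real_derivative ln t) (at 0)" using True by simp
        from DERIV_D[OF this] have "((\<lambda>h. (t powr h - 1) / h) \<longlongrightarrow> ln t) (at 0)"
          using True by simp
        then have "(\<lambda>j. (t powr hs j - 1) / hs j) \<longlonglongrightarrow> ln t"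
          unfolding hs_def by (rule filterlim_compose[OF _ hs_lim])
        then show ?thesis unfolding sq_def by (intro tendsto_mult tendsto_const)
      next
        case False
        then show ?thesis by (simp add: sq_def erl_zero)
      qed
    qed
    show "AE t in lborel. norm (sq j t) \<le> erl ?k t * (\<bar>ln t\<bar> * (1 + t))" for j
    proof (rule AE_I2)
      fix t :: real
      show "norm (sq j t) \<le> erl ?k t * (\<bar>ln t\<bar> * (1 + t))"
      proof (cases "t > 0")
        case True
        have "\<bar>(t powr hs j - 1) / hs j\<bar> \<le> \<bar>ln t\<bar> * (1 + t)"
          by (rule powr_quot_bound[OF True hpos])
        then have "erl ?k t * \<bar>(t powr hs j - 1) / hs j\<bar> \<le> erl ?k t * (\<bar>ln t\<bar> * (1 + t))"
          by (rule mult_left_mono) simp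
        moreover have "norm (sq j t) = erl ?k t * \<bar>(t powr hs j - 1) / hs j\<bar>"
          unfolding sq_def real_norm_def abs_mult by simp
        ultimately show ?thesis by simp
      next
        case False
        then show ?thesis by (simp add: sq_def erl_zero)
      qed
    qed
  qed
  have "(\<integral>t. erl ?k t * ln t \<partial>lborel) = (Gamma s * Digamma s) / fact ?k"
    using LIMSEQ_unique[OF lim2 lim1] .
  also have "\<dots> = Digamma s" using Gs by simp
  finally show ?thesis by (simp add: s_def)
qed


lemma dens_nonneg: "\<sigma> > 0 \<Longrightarrow> 0 \<le> gev_r_density r mu \<sigma> xi y"
  by (simp add: dens_eq wgt_nonneg prod_nonneg)

lemma meas_dens:
  assumes sig: "\<sigma> > 0" and r: "r \<ge> 1"
  shows "gev_r_density r mu \<sigma> xi \<in> borel_measurable (PiM {1..r} (\<lambda>_. lborel))"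
proof -
  have e: "gev_r_density r mu \<sigma> xi = (\<lambda>y. indicator {y. ordr r y} y * (exp (- Tf mu \<sigma> xi (y r)) * (\<Prod>j\<in>{1..r}. wgt mu \<sigma> xi (y j))))"
    by (rule ext) (rule dens_eq[OF sig])
  have "r \<in> {1..r}" using r by simp
  then have a: "(\<lambda>y::nat\<Rightarrow>real. y r) \<in> borel_measurable (PiM {1..r} (\<lambda>_. lborel))"
    using measurable_component_singleton[of r "{1..r}" "\<lambda>_. lborel"] by simp
  show ?thesis unfolding e using a by measurable
qed

lemma distr_from_law:
  assumes sig: "\<sigma> > 0" and r: "r \<ge> 1" and k: "k \<in> {1..r}"
    and HL: "\<And>G. G \<in> borel_measurable borel \<Longrightarrow> (\<And>t. 0 \<le> G t) \<Longrightarrow>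
      (\<integral>\<^sup>+y. ennreal (gev_r_density r mu \<sigma> xi y * G (Tf mu \<sigma> xi (y k))) \<partial>PiM {1..r} (\<lambda>_. lborel))
      = (\<integral>\<^sup>+t. ennreal (indicator {0<..} t * (exp (- t) * G t * (t ^ m / fact m))) \<partial>lborel)"
  shows "distr (gev_r_measure r mu \<sigma> xi) borel (\<lambda>y. Tf mu \<sigma> xi (y k)) = density lborel (erlang_density m 1)"
proof -
  let ?P = "PiM {1..r} (\<lambda>_. lborel :: real measure)"
  let ?\<nu> = "gev_r_measure r mu \<sigma> xi"
  let ?f = "\<lambda>y::nat\<Rightarrow>real. Tf mu \<sigma> xi (y k)"
  have md: "(\<lambda>y. ennreal (gev_r_density r mu \<sigma> xi y)) \<in> borel_measurable ?P"
    using meas_dens[OF sig r] by measurable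
  have sets\<nu>: "sets ?\<nu> = sets ?P" by (simp add: gev_r_measure_def)
  have space\<nu>: "space ?\<nu> = space ?P" by (simp add: gev_r_measure_def)
  have a: "(\<lambda>y::nat\<Rightarrow>real. y k) \<in> borel_measurable ?P"
    using measurable_component_singleton[of k "{1..r}" "\<lambda>_. lborel"] k by simp
  have mf: "?f \<in> borel_measurable ?P" using a by measurable
  have mf': "?f \<in> measurable ?\<nu> borel" using mf by (simp add: measurable_cong_sets[OF sets\<nu> refl])
  show ?thesis
  proof (rule measure_eqI)
    show "sets (distr ?\<nu> borel ?f) = sets (density lborel (erlang_density m 1))" by simp
    fix A assume "A \<in> sets (distr ?\<nu> borel ?f)"
    then have A: "A \<in> sets borel" by simp
    have pre: "?f -` A \<inter> space ?\<nu> \<in> sets ?P"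
      using measurable_sets[OF mf A] space\<nu> by simp
    have "emeasure (distr ?\<nu> borel ?f) A = emeasure ?\<nu> (?f -` A \<inter> space ?\<nu>)"
      by (rule emeasure_distr[OF mf' A])
    also have "\<dots> = (\<integral>\<^sup>+y. ennreal (gev_r_density r mu \<sigma> xi y) * indicator (?f -` A \<inter> space ?\<nu>) y \<partial>?P)"
    proof -
      have eqs: "?f -` A \<inter> space ?\<nu> = ?f -` A \<inter> space ?P" using space\<nu> by simp
      have pre': "?f -` A \<inter> space ?P \<in> sets ?P" using pre eqs by simp
      show ?thesis unfolding eqs unfolding gev_r_measure_def by (rule emeasure_density[OF md pre'])
    qed
    also have "\<dots> = (\<integral>\<^sup>+y. ennreal (gev_r_density r mu \<sigma> xi y * indicator A (?f y)) \<partial>?P)"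
    proof (rule nn_integral_cong)
      fix y assume "y \<in> space ?P"
      then show "ennreal (gev_r_density r mu \<sigma> xi y) * indicator (?f -` A \<inter> space ?\<nu>) y = ennreal (gev_r_density r mu \<sigma> xi y * indicator A (?f y))"
        using space\<nu> by (auto simp: indicator_def)
    qed
    also have "\<dots> = (\<integral>\<^sup>+t. ennreal (indicator {0<..} t * (exp (- t) * indicator A t * (t ^ m / fact m))) \<partial>lborel)"
      using A by (intro HL) auto
    also have "\<dots> = (\<integral>\<^sup>+t. ennreal (erlang_density m 1 t) * indicator A t \<partial>lborel)"
    proof (rule nn_integral_cong_AE)
      have "AE t in lborel. t \<noteq> 0" by (rule AE_lborel_singleton)
      then show "AE t in lborel. ennreal (indicator {0<..} t * (exp (- t) * indicator A t * (t ^ m / fact m))) = ennreal (erlang_density m 1 t) * indicator A t"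
      proof eventually_elim
        case (elim t)
        then show ?case
          by (cases "t > 0") (auto simp: erlang_density_def indicator_def)
      qed
    qed
    also have "\<dots> = emeasure (density lborel (erlang_density m 1)) A"
      using A by (subst emeasure_density) auto
    finally show "emeasure (distr ?\<nu> borel ?f) A = emeasure (density lborel (erlang_density m 1)) A" .
  qed
qed


lemma sq4_bound: "(a + b + c + d)\<^sup>2 \<le> 4 * (a\<^sup>2 + b\<^sup>2 + c\<^sup>2 + d\<^sup>2)" for a b c d :: real
proof -
  have "4 * (a\<^sup>2 + b\<^sup>2 + c\<^sup>2 + d\<^sup>2) - (a + b + c + d)\<^sup>2
      = (a - b)\<^sup>2 + (a - c)\<^sup>2 + (a - d)\<^sup>2 + (b - c)\<^sup>2 + (b - d)\<^sup>2 + (c - d)\<^sup>2"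
    by (simp add: power2_eq_square algebra_simps)
  moreover have "0 \<le> (a - b)\<^sup>2 + (a - c)\<^sup>2 + (a - d)\<^sup>2 + (b - c)\<^sup>2 + (b - d)\<^sup>2 + (c - d)\<^sup>2"
    by simp
  ultimately show ?thesis by linarith
qed

lemma main_aux:
  fixes n :: nat and mu \<sigma> xi :: real
  assumes sig: "\<sigma> > 0"
  defines "r \<equiv> Suc (Suc n)"
  shows "integrable (gev_r_measure r mu \<sigma> xi) (gev_D r mu \<sigma> xi)
    \<and> (\<integral>y. gev_D r mu \<sigma> xi y \<partial>gev_r_measure r mu \<sigma> xi)
        = - ln \<sigma> - 1 + (1 + xi) * Digamma (real r)
    \<and> integrable (gev_r_measure r mu \<sigma> xi) (\<lambda>y. (gev_D r mu \<sigma> xi y)\<^sup>2)"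
proof -
  let ?P = "PiM {1..r} (\<lambda>_. lborel :: real measure)"
  let ?\<nu> = "gev_r_measure r mu \<sigma> xi"
  let ?X = "\<lambda>y::nat\<Rightarrow>real. Tf mu \<sigma> xi (y r)"
  let ?Y = "\<lambda>y::nat\<Rightarrow>real. Tf mu \<sigma> xi (y (Suc n))"
  have r1: "r \<ge> 1" by (simp add: r_def)
  have sets\<nu>: "sets ?\<nu> = sets ?P" by (simp add: gev_r_measure_def)
  have a: "(\<lambda>y::nat\<Rightarrow>real. y r) \<in> borel_measurable ?\<nu>"
    using measurable_component_singleton[of r "{1..r}" "\<lambda>_. lborel"] r1
    by (simp add: measurable_cong_sets[OF sets\<nu> refl])
  have "Suc n \<in> {1..r}" by (simp add: r_def)
  then have b0: "(\<lambda>y::nat\<Rightarrow>real. y (Suc n)) \<in> borel_measurable ?P"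
    using measurable_component_singleton[of "Suc n" "{1..r}" "\<lambda>_. lborel"] by simp
  have b: "(\<lambda>y::nat\<Rightarrow>real. y (Suc n)) \<in> borel_measurable ?\<nu>"
    by (subst measurable_cong_sets[OF sets\<nu> refl]) (rule b0)
  have mX: "?X \<in> borel_measurable ?\<nu>" using a by measurable
  have mY: "?Y \<in> borel_measurable ?\<nu>" using b by measurable
  have DX: "distr ?\<nu> borel ?X = density lborel (erlang_density (Suc n) 1)"
    unfolding r_def
    by (rule distr_from_law[OF sig _ _ law_last[OF sig]]) simp_all
  have DY: "distr ?\<nu> borel ?Y = density lborel (erlang_density n 1)"
    unfolding r_def
    by (rule distr_from_law[OF sig _ _ law_prev[OF sig]]) simp_all
  have T: "(integrable ?\<nu> (\<lambda>y. \<phi> (Z y)) \<longleftrightarrow> integrable lborel (\<lambda>t. erlang_density m 1 t * \<phi> t))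
      \<and> (\<integral>y. \<phi> (Z y) \<partial>?\<nu>) = (\<integral>t. erlang_density m 1 t * \<phi> t \<partial>lborel)"
    if D: "distr ?\<nu> borel Z = density lborel (erlang_density m 1)" and mZ: "Z \<in> borel_measurable ?\<nu>"
      and m\<phi>: "\<phi> \<in> borel_measurable borel" for Z m and \<phi> :: "real \<Rightarrow> real"
  proof
    have "integrable ?\<nu> (\<lambda>y. \<phi> (Z y)) \<longleftrightarrow> integrable (distr ?\<nu> borel Z) \<phi>"
      by (rule integrable_distr_eq[symmetric, OF mZ m\<phi>])
    also have "\<dots> \<longleftrightarrow> integrable lborel (\<lambda>t. erlang_density m 1 t *\<^sub>R \<phi> t)"
      unfolding D by (rule integrable_density) (use m\<phi> in auto)
    finally show "integrable ?\<nu> (\<lambda>y. \<phi> (Z y)) \<longleftrightarrow> integrable lborel (\<lambda>t. erlang_density m 1 t * \<phi> t)"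
      by simp
    have "(\<integral>y. \<phi> (Z y) \<partial>?\<nu>) = (\<integral>t. \<phi> t \<partial>distr ?\<nu> borel Z)"
      by (rule integral_distr[symmetric, OF mZ m\<phi>])
    also have "\<dots> = (\<integral>t. erlang_density m 1 t *\<^sub>R \<phi> t \<partial>lborel)"
      unfolding D by (rule integral_density) (use m\<phi> in auto)
    finally show "(\<integral>y. \<phi> (Z y) \<partial>?\<nu>) = (\<integral>t. erlang_density m 1 t * \<phi> t \<partial>lborel)"
      by simp
  qed
  have ps: "prob_space ?\<nu>"
  proof
    have "emeasure ?\<nu> (space ?\<nu>) = emeasure (distr ?\<nu> borel ?X) UNIV"
      using mX by (subst emeasure_distr) auto
    also have "\<dots> = emeasure (density lborel (erlang_density (Suc n) 1)) (space (density lborel (erlang_density (Suc n) 1)))"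
      unfolding DX by simp
    also have "\<dots> = 1"
      by (rule prob_space.emeasure_space_1[OF prob_space_erlang_density]) simp
    finally show "emeasure ?\<nu> (space ?\<nu>) = 1" .
  qed
  interpret prob_space ?\<nu> by (rule ps)
  have iX: "integrable ?\<nu> ?X" and eX: "(\<integral>y. ?X y \<partial>?\<nu>) = real (Suc (Suc n))"
    using T[OF DX mX, of "\<lambda>t. t"] erl_moment[of "Suc n" 1] by (auto simp: fact_Suc)
  have iY: "integrable ?\<nu> ?Y" and eY: "(\<integral>y. ?Y y \<partial>?\<nu>) = real (Suc n)"
    using T[OF DY mY, of "\<lambda>t. t"] erl_moment[of n 1] by (auto simp: fact_Suc)
  have iX2: "integrable ?\<nu> (\<lambda>y. (?X y)\<^sup>2)"
    using T[OF DX mX, of "\<lambda>t. t\<^sup>2"] erl_moment[of "Suc n" 2] by auto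
  have iY2: "integrable ?\<nu> (\<lambda>y. (?Y y)\<^sup>2)"
    using T[OF DY mY, of "\<lambda>t. t\<^sup>2"] erl_moment[of n 2] by auto
  have iL: "integrable ?\<nu> (\<lambda>y. ln (?X y))" and eL: "(\<integral>y. ln (?X y) \<partial>?\<nu>) = Digamma (real r)"
    using T[OF DX mX, of ln] erl_ln_int[of n] erl_ln_integral[of n] by (auto simp: r_def add.commute)
  have iL2: "integrable ?\<nu> (\<lambda>y. (ln (?X y))\<^sup>2)"
    using T[OF DX mX, of "\<lambda>t. (ln t)\<^sup>2"] erl_ln_sq_int[of n] by auto
  let ?F = "\<lambda>y. - ln \<sigma> - ?X y + ?Y y + (1 + xi) * ln (?X y)"
  have mD: "gev_D r mu \<sigma> xi \<in> borel_measurable ?\<nu>"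
  proof -
    have e: "gev_D r mu \<sigma> xi = (\<lambda>y. - ln \<sigma> - Tf mu \<sigma> xi (y r) + Tf mu \<sigma> xi (y (Suc n)) - gev_h xi (gev_z mu \<sigma> (y r)))"
      by (auto simp: fun_eq_iff gev_D_def Tf_def r_def)
    show ?thesis unfolding e gev_h_def gev_z_def using a b by measurable
  qed
  have AE: "AE y in ?\<nu>. gev_D r mu \<sigma> xi y = ?F y"
  proof -
    have md: "(\<lambda>y. ennreal (gev_r_density r mu \<sigma> xi y)) \<in> borel_measurable ?P"
      using meas_dens[OF sig r1] by measurable
    have "AE y in ?P. 0 < ennreal (gev_r_density r mu \<sigma> xi y) \<longrightarrow> gev_D r mu \<sigma> xi y = ?F y"
    proof (rule AE_I2, rule impI)
      fix y :: "nat \<Rightarrow> real"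
      assume "0 < ennreal (gev_r_density r mu \<sigma> xi y)"
      then have "gev_r_density r mu \<sigma> xi y \<noteq> 0" by auto
      then have "\<forall>j\<in>{1..r}. gev_supp xi (gev_z mu \<sigma> (y j))"
        unfolding gev_r_density_def by (auto split: if_splits)
      then have "Sp mu \<sigma> xi (y r)" using r1 by (simp add: Sp_def)
      from h_eq[OF sig this] show "gev_D r mu \<sigma> xi y = ?F y"
        by (simp add: gev_D_def Tf_def r_def algebra_simps)
    qed
    then show ?thesis unfolding gev_r_measure_def by (subst AE_density[OF md])
  qed
  have iF: "integrable ?\<nu> ?F"
    using iX iY iL by (intro Bochner_Integration.integrable_add Bochner_Integration.integrable_diff
        Bochner_Integration.integrable_mult_right integrable_const) auto
  have iD: "integrable ?\<nu> (gev_D r mu \<sigma> xi)"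
    using iF AE mD by (subst integrable_cong_AE[OF mD _ AE]) (auto intro: borel_measurable_integrable)
  have "(\<integral>y. gev_D r mu \<sigma> xi y \<partial>?\<nu>) = (\<integral>y. ?F y \<partial>?\<nu>)"
    by (rule integral_cong_AE[OF mD borel_measurable_integrable[OF iF] AE])
  also have "\<dots> = - ln \<sigma> - (\<integral>y. ?X y \<partial>?\<nu>) + (\<integral>y. ?Y y \<partial>?\<nu>) + (1 + xi) * (\<integral>y. ln (?X y) \<partial>?\<nu>)"
    using iX iY iL by (simp add: Bochner_Integration.integral_add Bochner_Integration.integral_diff prob_space)
  also have "\<dots> = - ln \<sigma> - 1 + (1 + xi) * Digamma (real r)"
    using eX eY eL by simp
  finally have eD: "(\<integral>y. gev_D r mu \<sigma> xi y \<partial>?\<nu>) = - ln \<sigma> - 1 + (1 + xi) * Digamma (real r)" .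
  let ?B = "\<lambda>y. 4 * ((ln \<sigma>)\<^sup>2 + (?X y)\<^sup>2 + (?Y y)\<^sup>2 + (1 + xi)\<^sup>2 * (ln (?X y))\<^sup>2)"
  have iB: "integrable ?\<nu> ?B"
    using iX2 iY2 iL2 by (intro Bochner_Integration.integrable_add Bochner_Integration.integrable_mult_right integrable_const) auto
  have iD2: "integrable ?\<nu> (\<lambda>y. (gev_D r mu \<sigma> xi y)\<^sup>2)"
  proof (rule Bochner_Integration.integrable_bound[OF iB])
    show "(\<lambda>y. (gev_D r mu \<sigma> xi y)\<^sup>2) \<in> borel_measurable ?\<nu>" using mD by measurable
    show "AE y in ?\<nu>. norm ((gev_D r mu \<sigma> xi y)\<^sup>2) \<le> norm (?B y)"
      using AE
    proof eventually_elim
      case (elim y)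
      have "(gev_D r mu \<sigma> xi y)\<^sup>2 = (- ln \<sigma> + (- ?X y) + ?Y y + (1 + xi) * ln (?X y))\<^sup>2"
        using elim by simp
      also have "\<dots> \<le> 4 * ((- ln \<sigma>)\<^sup>2 + (- ?X y)\<^sup>2 + (?Y y)\<^sup>2 + ((1 + xi) * ln (?X y))\<^sup>2)"
        by (rule sq4_bound)
      also have "\<dots> = ?B y" by (simp add: power_mult_distrib)
      finally have "(gev_D r mu \<sigma> xi y)\<^sup>2 \<le> ?B y" .
      moreover have "0 \<le> ?B y" by simp
      ultimately show ?case by simp
    qed
  qed
  show ?thesis using iD eD iD2 by simp
qed

theorem mainTheorem2:
  fixes r :: nat and mu \<sigma> xi :: real
  assumes "r \<ge> 2" and "\<sigma> > 0"
  shows "integrable (gev_r_measure r mu \<sigma> xi) (gev_D r mu \<sigma> xi)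
    \<and> (\<integral>y. gev_D r mu \<sigma> xi y \<partial>gev_r_measure r mu \<sigma> xi)
        = - ln \<sigma> - 1 + (1 + xi) * Digamma (real r)
    \<and> integrable (gev_r_measure r mu \<sigma> xi) (\<lambda>y. (gev_D r mu \<sigma> xi y)\<^sup>2)"
proof -
  obtain n where r: "r = Suc (Suc n)" using assms(1) by (metis add_2_eq_Suc le_Suc_ex)
  show ?thesis unfolding r by (rule main_aux[OF assms(2)])
qed


end
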